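(* Let $p$ be an odd prime, $\chi$ a Dirichlet character with odd conductor $f$, and $n,c,k$ positive integers with $c\equiv0\pmod{p-1}$. Then $$\Delta_c^k\epsilon_{n,\chi}\equiv0\pmod{p^k\mathbb Z_p[\chi]},$$ where $\Delta_c^k a_n=\sum_{j=0}^k\binom kj(-1)^{k-j}a_{n+jc}$.
   Context: $\mathbb Z_p[\chi]$ is the ring generated over $\mathbb Z_p$ by the values of $\chi$. For a primitive Dirichlet character $\psi$ of odd conductor $f_\psi$, the generalized Euler numbers $E_{n,\psi}$ are defined by $2\sum_{a=1}^{f_\psi}\frac{(-1)^a\psi(a)e^{at}}{e^{f_\psi t}+1}=\sum_{n\ge0}E_{n,\psi}\frac{t^n}{n!}$ (with $\psi(a)=0$ if $\gcd(a,f_\psi)>1$). Let $\omega$ be the Teichmüller character mod $p$. For $n\ge0$, $\chi_n$ is the primitive Dirichlet character associated with $a\mapsto\chi(a)\omega^{-n}(a)$ on $(\mathbb Z/\mathrm{lcm}(f,p)\mathbb Z)^\times$, and $\epsilon_{n,\chi}=(1-\chi_n(p)p^n)E_{n,\chi_n}$. *)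

theory Defs
  imports "HOL-Computational_Algebra.Computational_Algebra" "HOL-Number_Theory.Number_Theory"
begin

definition dirichlet_char :: "nat \<Rightarrow> (nat \<Rightarrow> complex) \<Rightarrow> bool" where
  "dirichlet_char m \<chi> \<longleftrightarrow> m > 0 \<and> (\<forall>a b. \<chi> (a * b) = \<chi> a * \<chi> b) \<and>
     (\<forall>a. \<chi> (a + m) = \<chi> a) \<and> (\<forall>a. \<chi> a = 0 \<longleftrightarrow> \<not> coprime a m) \<and> \<chi> 1 = 1"

definition primitive_char :: "nat \<Rightarrow> (nat \<Rightarrow> complex) \<Rightarrow> bool" where
  "primitive_char m \<chi> \<longleftrightarrow> dirichlet_char m \<chi> \<and>
     \<not> (\<exists>d. d dvd m \<and> d < m \<and> (\<forall>a. coprime a m \<and> [a = 1] (mod d) \<longrightarrow> \<chi> a = 1))"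

definition assoc_prim :: "nat \<Rightarrow> (nat \<Rightarrow> complex) \<Rightarrow> nat \<times> (nat \<Rightarrow> complex)" where
  "assoc_prim M g = (THE (F, \<psi>). F dvd M \<and> primitive_char F \<psi> \<and>
                        (\<forall>a. coprime a M \<longrightarrow> \<psi> a = g a))"

text \<open>Extensions of the p-adic absolute value to the algebraic numbers in \<complex>
  (equivalently: a choice of embedding of the algebraic numbers into \<complex>_p).\<close>
definition padic_abs_ext :: "nat \<Rightarrow> (complex \<Rightarrow> real) \<Rightarrow> bool" where
  "padic_abs_ext p N \<longleftrightarrow>
     (\<forall>x. algebraic x \<longrightarrow> N x \<ge> 0 \<and> (N x = 0 \<longleftrightarrow> x = 0)) \<and>
     (\<forall>x y. algebraic x \<and> algebraic y \<longrightarrow>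
         N (x * y) = N x * N y \<and> N (x + y) \<le> max (N x) (N y)) \<and>
     (\<forall>m::int. m \<noteq> 0 \<longrightarrow> N (of_int m) = real p powr (- real (multiplicity (int p) m)))"

definition teich :: "nat \<Rightarrow> (complex \<Rightarrow> real) \<Rightarrow> nat \<Rightarrow> complex" where
  "teich p N a = (if p dvd a then 0 else
     (THE z. z ^ (p - 1) = 1 \<and> N (z - of_nat a) < 1))"

definition gen_euler :: "nat \<Rightarrow> (nat \<Rightarrow> complex) \<Rightarrow> nat \<Rightarrow> complex" where
  "gen_euler F \<psi> n = fact n * fps_nth
     ((\<Sum>a=1..F. fps_const (2 * (-1) ^ a * \<psi> a) * fps_exp (of_nat a))
        / (fps_exp (of_nat F) + 1)) n"

definition eps :: "nat \<Rightarrow> (complex \<Rightarrow> real) \<Rightarrow> nat \<Rightarrow> (nat \<Rightarrow> complex) \<Rightarrow> nat \<Rightarrow> complex" where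
  "eps p N f \<chi> n = (case assoc_prim (lcm f p) (\<lambda>a. \<chi> a * inverse (teich p N a) ^ n) of
      (F, \<psi>) \<Rightarrow> (1 - \<psi> p * of_nat p ^ n) * gen_euler F \<psi> n)"

definition delta_op :: "nat \<Rightarrow> nat \<Rightarrow> (nat \<Rightarrow> complex) \<Rightarrow> nat \<Rightarrow> complex" where
  "delta_op c k a n = (\<Sum>j\<le>k. of_nat (k choose j) * (-1) ^ (k - j) * a (n + j * c))"

inductive_set zring :: "complex set \<Rightarrow> complex set" for S where
  zr_int: "of_int m \<in> zring S"
| zr_gen: "x \<in> S \<Longrightarrow> x \<in> zring S"
| zr_add: "x \<in> zring S \<Longrightarrow> y \<in> zring S \<Longrightarrow> x + y \<in> zring S"
| zr_mult: "x \<in> zring S \<Longrightarrow> y \<in> zring S \<Longrightarrow> x * y \<in> zring S"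

text \<open>y lies in Z_p[chi] = closure of Z[chi] in the completion.\<close>
definition in_Zp_chi :: "(complex \<Rightarrow> real) \<Rightarrow> (nat \<Rightarrow> complex) \<Rightarrow> complex \<Rightarrow> bool" where
  "in_Zp_chi N \<chi> y \<longleftrightarrow> (\<forall>e>0. \<exists>z\<in>zring (range \<chi>). N (y - z) < e)"

end

theory Submission
  imports Defs "HOL-Algebra.Finite_Extensions" "HOL-Algebra.Algebraic_Closure_Type"
begin


definition CR :: "complex ring" where "CR = ring_of_type_algebra"

lemma CR_field: "field CR" unfolding CR_def by (rule field_from_type_algebra)
lemma CR_domain: "domain CR" using CR_field field.axioms(1) by blast
lemma CR_cring: "cring CR" using CR_domain domain.axioms(1) by blast

interpretation CRr: cring CR by (rule CR_cring)

lemma CR_simps [simp]: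
  "carrier CR = UNIV" "mult CR = (*)" "add CR = (+)" "zero CR = 0" "one CR = 1"
  by (auto simp: CR_def ring_of_type_algebra_def)

lemma CR_pow [simp]: "x [^]\<^bsub>CR\<^esub> (n::nat) = x ^ n"
  by (induction n) (auto)

lemma CR_uminus [simp]: "\<ominus>\<^bsub>CR\<^esub> x = - x"
  by (rule CRr.add.inv_equality) auto

lemma CR_inv [simp]: "x \<noteq> 0 \<Longrightarrow> inv\<^bsub>CR\<^esub> x = inverse x"
  by (rule CRr.comm_inv_char) auto

lemma CR_eval: "CRr.eval l x = poly (Poly (rev l)) x"
proof (induction l)
  case Nil then show ?case by simp
next
  case (Cons a l)
  have "CRr.eval (a # l) x = a * x ^ length l + CRr.eval l x"
    by simp
  also have "Poly (rev (a # l)) = Poly (rev l) + Polynomial.monom a (length l)"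
    by (simp add: Poly_append Polynomial.monom_altdef)
  ultimately show ?case using Cons by (simp add: poly_monom)
qed

lemma Rats_subring: "subring (\<rat> :: complex set) CR"
  by (rule CRr.subringI) auto

lemma Rats_subfield: "subfield (\<rat> :: complex set) CR"
  by (rule field.subfieldI'[OF CR_field Rats_subring]) auto

lemma alg_to_CR:
  assumes "algebraic (x::complex)"
  shows "\<not> CRr.transcendental \<rat> x"
proof -
  from assms obtain q where q: "\<And>i. poly.coeff q i \<in> \<rat>" "q \<noteq> 0" "poly q x = 0"
    unfolding algebraic_altdef by blast
  define l where "l = rev (coeffs q)"
  have "Poly (rev l) = q" by (simp add: l_def)
  hence ev: "CRr.eval l x = 0" using q by (simp add: CR_eval)
  have "l \<noteq> []" using q by (simp add: l_def)
  moreover have "set l \<subseteq> \<rat>" using q by (auto simp: l_def coeffs_def)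
  moreover have "hd l \<noteq> 0" using q by (simp add: l_def hd_rev last_coeffs_eq_coeff_degree)
  ultimately have "l \<in> carrier (\<rat>[X]\<^bsub>CR\<^esub>)"
    by (auto simp: univ_poly_def polynomial_def)
  thus ?thesis using CRr.algebraicI[of l \<rat> x] ev \<open>l \<noteq>[]\<close> by (simp add: over_def)
qed

lemma CR_to_alg:
  assumes "\<not> CRr.transcendental \<rat> (x::complex)"
  shows "algebraic x"
proof -
  obtain l where l: "l \<in> carrier (\<rat>[X]\<^bsub>CR\<^esub>)" "l \<noteq> []" "CRr.eval l x = 0"
    using domain.algebraicE[OF CR_domain Rats_subring, of x] assms by (auto simp: over_def)
  have sl: "set l \<subseteq> \<rat>" "hd l \<noteq> 0" using l by (auto simp: univ_poly_def polynomial_def)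
  define q where "q = Poly (rev l)"
  have "poly q x = 0" using l by (simp add: q_def CR_eval)
  moreover have "poly.coeff q i \<in> \<rat>" for i
    using sl by (auto simp: q_def nth_default_def rev_nth)
  moreover have "q \<noteq> 0"
  proof
    assume "q = 0"
    then obtain n where n: "rev l = replicate n 0" by (auto simp: q_def Poly_eq_0)
    hence "last (rev l) = 0" using l(2) by (cases n) auto
    thus False using sl l(2) by (simp add: last_rev)
  qed
  ultimately show ?thesis by (intro algebraicI') auto
qed

lemma alg_iff_CR: "algebraic (x::complex) \<longleftrightarrow> \<not> CRr.transcendental \<rat> x"
  using alg_to_CR CR_to_alg by blast

lemma alg_subfield: "subfield {x \<in> carrier CR. \<not> CRr.transcendental \<rat> x} CR"
  using field.subfield_of_algebraics[OF CR_field Rats_subfield] by (simp add: over_def)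

lemma alg_add [intro]: "algebraic (x::complex) \<Longrightarrow> algebraic y \<Longrightarrow> algebraic (x + y)"
  using subringE(7)[OF subfieldE(1)[OF alg_subfield], of x y] by (simp add: alg_iff_CR)

lemma alg_mult [intro]: "algebraic (x::complex) \<Longrightarrow> algebraic y \<Longrightarrow> algebraic (x * y)"
  using subringE(6)[OF subfieldE(1)[OF alg_subfield], of x y] by (simp add: alg_iff_CR)

lemma alg_uminus [intro]: "algebraic (x::complex) \<Longrightarrow> algebraic (- x)"
  using subringE(5)[OF subfieldE(1)[OF alg_subfield], of x] by (simp add: alg_iff_CR)

lemma alg_diff [intro]: "algebraic (x::complex) \<Longrightarrow> algebraic y \<Longrightarrow> algebraic (x - y)"
  using alg_add[of x "-y"] alg_uminus[of y] by simp

lemma alg_inverse [intro]: "algebraic (x::complex) \<Longrightarrow> algebraic (inverse x)"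
proof (cases "x = 0")
  case False
  assume "algebraic x"
  thus ?thesis using ring.subfield_m_inv(1)[OF CRr.ring_axioms alg_subfield, of x] False
    by (simp add: alg_iff_CR)
qed simp


hide_const (open) Divisibility.prime Polynomials.degree up_ring.coeff up_ring.monom
  Polynomials.lead_coeff Coset.order Divisibility.irreducible UnivPoly.eval

locale padic =
  fixes p :: nat and N :: "complex \<Rightarrow> real"
  assumes prime_p: "prime p" and odd_p: "odd p" and abs_ext: "padic_abs_ext p N"
begin

lemma p_gt2: "p > 2"
  using prime_p odd_p prime_ge_2_nat[OF prime_p] by (cases "p = 2") auto

lemma p_pos [simp]: "p > 0" using p_gt2 by simp

lemma N_nonneg: "algebraic x \<Longrightarrow> N x \<ge> 0"
  using abs_ext unfolding padic_abs_ext_def by blast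
lemma N_eq0: "algebraic x \<Longrightarrow> N x = 0 \<longleftrightarrow> x = 0"
  using abs_ext unfolding padic_abs_ext_def by blast
lemma N_mult: "algebraic x \<Longrightarrow> algebraic y \<Longrightarrow> N (x * y) = N x * N y"
  using abs_ext unfolding padic_abs_ext_def by blast
lemma N_ultra: "algebraic x \<Longrightarrow> algebraic y \<Longrightarrow> N (x + y) \<le> max (N x) (N y)"
  using abs_ext unfolding padic_abs_ext_def by blast
lemma N_int: "m \<noteq> 0 \<Longrightarrow> N (of_int m) = real p powr (- real (multiplicity (int p) m))"
  using abs_ext unfolding padic_abs_ext_def by blast

lemma alg_of_int [simp, intro]: "algebraic (of_int m :: complex)"
  by (rule algebraicI[of "[:-of_int m, 1:]"]) (auto simp: coeff_pCons split: nat.splits)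
lemma alg_of_nat [simp, intro]: "algebraic (of_nat m :: complex)"
  using alg_of_int[of "int m"] by simp
lemma alg_0 [simp, intro]: "algebraic (0::complex)" using alg_of_nat[of 0] by simp
lemma alg_1 [simp, intro]: "algebraic (1::complex)" using alg_of_nat[of 1] by simp
lemma alg_power [intro]: "algebraic (x::complex) \<Longrightarrow> algebraic (x ^ n)"
  by (induction n) auto
lemma alg_divide [intro]: "algebraic (x::complex) \<Longrightarrow> algebraic y \<Longrightarrow> algebraic (x / y)"
  by (simp add: divide_inverse alg_mult alg_inverse)
lemma alg_sum [intro]: "(\<And>i. i \<in> A \<Longrightarrow> algebraic (f i :: complex)) \<Longrightarrow> algebraic (sum f A)"
  by (induction A rule: infinite_finite_induct) auto
lemma alg_prod [intro]: "(\<And>i. i \<in> A \<Longrightarrow> algebraic (f i :: complex)) \<Longrightarrow> algebraic (prod f A)"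
  by (induction A rule: infinite_finite_induct) auto
lemma alg_root_unity: "z ^ m = (1::complex) \<Longrightarrow> m > 0 \<Longrightarrow> algebraic z"
  by (rule algebraicI[of "Polynomial.monom 1 m - 1"])
     (auto simp: poly_monom Polynomial.coeff_monom of_nat_diff split: if_splits
       dest: arg_cong[where f="\<lambda>q. poly.coeff q m"])

lemma N_0 [simp]: "N 0 = 0" using N_eq0[of 0] by simp

lemma N_1 [simp]: "N 1 = 1"
  using N_int[of 1] by simp

lemma N_m1: "N (-1) = 1"
  using N_int[of "-1"] by (simp add: multiplicity_unit_right)

lemma N_uminus [simp]: "algebraic x \<Longrightarrow> N (- x) = N x"
  using N_mult[of "-1" x] N_m1 by simp

lemma N_diff_comm: "algebraic x \<Longrightarrow> algebraic y \<Longrightarrow> N (x - y) = N (y - x)"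
  using N_uminus[of "y - x"] by (simp add: alg_diff)

lemma N_diff: "algebraic x \<Longrightarrow> algebraic y \<Longrightarrow> N (x - y) \<le> max (N x) (N y)"
  using N_ultra[of x "-y"] by (simp add: alg_uminus)

lemma N_power: "algebraic x \<Longrightarrow> N (x ^ n) = N x ^ n"
  by (induction n) (auto simp: N_mult alg_power)

lemma N_int_dvd: "int p ^ j dvd m \<Longrightarrow> N (of_int m) \<le> inverse (real p ^ j)"
proof (cases "m = 0")
  case False
  assume d: "int p ^ j dvd m"
  have "multiplicity (int p) m \<ge> j"
    using False prime_p d by (intro multiplicity_geI) (auto simp: prime_gt_1_nat)
  hence "real p powr (- real (multiplicity (int p) m)) \<le> real p powr (- real j)"
    using prime_gt_1_nat[OF prime_p] by (intro powr_mono) auto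
  thus ?thesis using N_int[OF False] prime_gt_1_nat[OF prime_p]
    by (simp add: powr_minus powr_realpow)
qed simp

lemma N_int_le1: "N (of_int m) \<le> 1"
  using N_int_dvd[of 0 m] by simp

lemma N_nat_le1: "N (of_nat m) \<le> 1"
  using N_int_le1[of "int m"] by simp

lemma N_int_coprime: "\<not> int p dvd m \<Longrightarrow> N (of_int m) = 1"
  using N_int[of m] by (cases "m = 0") (auto simp: not_dvd_imp_multiplicity_0)

lemma N_p: "N (of_nat p) = inverse (real p)"
  using N_int[of "int p"] prime_p prime_gt_1_nat[OF prime_p]
  by (simp add: powr_minus multiplicity_self prime_imp_prime_elem)

lemma N_p_power: "N (of_nat p ^ j) = inverse (real p ^ j)"
  using N_power[of "of_nat p" j] N_p by (simp add: power_inverse)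

lemma N_inverse: "algebraic x \<Longrightarrow> N (inverse x) = inverse (N x)"
proof (cases "x = 0")
  case False
  assume a: "algebraic x"
  have "N (x * inverse x) = 1" using False by simp
  hence "N x * N (inverse x) = 1" using N_mult[of x "inverse x"] a alg_inverse[OF a] by simp
  thus ?thesis by (metis inverse_unique)
qed simp

lemma N_2: "N 2 = 1"
proof -
  have "\<not> int p dvd 2" using p_gt2 by (auto dest: zdvd_imp_le)
  thus ?thesis using N_int_coprime[of 2] by simp
qed

lemma N_root_unity: "z ^ m = 1 \<Longrightarrow> m > 0 \<Longrightarrow> N z = 1"
proof -
  assume z: "z ^ m = 1" "m > 0"
  have az: "algebraic z" using alg_root_unity[OF z] .
  have "N z ^ m = 1" using N_power[OF az, of m] z by simp
  thus "N z = 1" using N_nonneg[OF az] z(2) power_eq_iff_eq_base[of m "N z" 1] by simp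
qed

definition pint :: "complex \<Rightarrow> bool" where "pint x \<longleftrightarrow> algebraic x \<and> N x \<le> 1"

lemma pint_int [simp, intro]: "pint (of_int m)" by (simp add: pint_def N_int_le1)
lemma pint_nat [simp, intro]: "pint (of_nat m)" by (simp add: pint_def N_nat_le1)
lemma pint_0 [simp, intro]: "pint 0" using pint_nat[of 0] by simp
lemma pint_1 [simp, intro]: "pint 1" using pint_nat[of 1] by simp
lemma pint_add [intro]: "pint x \<Longrightarrow> pint y \<Longrightarrow> pint (x + y)"
  unfolding pint_def using N_ultra by (auto intro!: alg_add) (smt (verit) N_ultra)
lemma pint_mult [intro]: "pint x \<Longrightarrow> pint y \<Longrightarrow> pint (x * y)"
  unfolding pint_def using N_mult N_nonneg by (auto intro!: alg_mult mult_le_one)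
lemma pint_uminus [intro]: "pint x \<Longrightarrow> pint (- x)"
  unfolding pint_def by auto
lemma pint_diff [intro]: "pint x \<Longrightarrow> pint y \<Longrightarrow> pint (x - y)"
  using pint_add[of x "-y"] pint_uminus[of y] by simp
lemma pint_power [intro]: "pint x \<Longrightarrow> pint (x ^ n)"
  by (induction n) auto
lemma pint_sum [intro]: "(\<And>i. i \<in> A \<Longrightarrow> pint (f i)) \<Longrightarrow> pint (sum f A)"
  by (induction A rule: infinite_finite_induct) auto
lemma pint_prod [intro]: "(\<And>i. i \<in> A \<Longrightarrow> pint (f i)) \<Longrightarrow> pint (prod f A)"
  by (induction A rule: infinite_finite_induct) auto
lemma pint_half [intro]: "pint (1/2)"
  unfolding pint_def using N_inverse[of 2] N_2 by (auto simp: inverse_eq_divide)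
lemma pint_root_unity: "z ^ m = 1 \<Longrightarrow> m > 0 \<Longrightarrow> pint z"
  unfolding pint_def using alg_root_unity N_root_unity by auto
lemma pint_alg: "pint x \<Longrightarrow> algebraic x" by (simp add: pint_def)
lemma pint_N: "pint x \<Longrightarrow> N x \<le> 1" by (simp add: pint_def)

lemma N_sum_le:
  assumes "\<And>i. i \<in> A \<Longrightarrow> algebraic (f i) \<and> N (f i) \<le> B" "B \<ge> 0"
  shows "N (sum f A) \<le> B"
  using assms
proof (induction A rule: infinite_finite_induct)
  case (insert x F)
  have "N (f x + sum f F) \<le> max (N (f x)) (N (sum f F))"
    using insert by (intro N_ultra) auto
  moreover have "N (f x) \<le> B" "N (sum f F) \<le> B" using insert by auto
  ultimately show ?case using insert.hyps by simp
qed auto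

lemma N_mult_le:
  assumes "pint a" "algebraic x" "N x \<le> B" shows "N (a * x) \<le> B"
proof -
  have "N (a * x) = N a * N x" using assms by (simp add: N_mult pint_def)
  also have "\<dots> \<le> 1 * N x" using assms N_nonneg[of x] by (intro mult_right_mono) (auto simp: pint_def)
  finally show ?thesis using assms by simp
qed

lemma N_power_diff:
  assumes "pint u" "pint v" shows "N (u ^ j - v ^ j) \<le> N (u - v)"
proof (induction j)
  case 0 then show ?case using N_nonneg[of "u - v"] assms by (auto simp: pint_def)
next
  case (Suc j)
  have eq: "u ^ Suc j - v ^ Suc j = u * (u ^ j - v ^ j) + v ^ j * (u - v)"
    by (simp add: algebra_simps)
  have pp: "pint (u ^ j - v ^ j)" "pint (u - v)" "pint (v ^ j)" using assms by auto
  have a1: "N (u * (u ^ j - v ^ j)) \<le> N (u - v)"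
    using Suc assms pp by (intro N_mult_le) (auto simp: pint_def)
  have a2: "N (v ^ j * (u - v)) \<le> N (u - v)"
    using assms pp by (intro N_mult_le) (auto simp: pint_def simp del: N_power)
  note pp
  thus ?case unfolding eq using assms a1 a2
    by (intro order.trans[OF N_ultra]) (auto simp: pint_def)
qed

end


context padic
begin

lemma N_cong:
  assumes "[a = b] (mod p ^ j)"
  shows "N (of_nat a - of_nat b) \<le> inverse (real p ^ j)"
proof -
  have "[int a = int b] (mod int (p ^ j))" using assms by (simp only: cong_int_iff)
  hence "int p ^ j dvd int a - int b" by (simp add: cong_iff_dvd_diff of_nat_power)
  from N_int_dvd[OF this] show ?thesis by simp
qed

lemma N_add_lt:
  assumes "algebraic x" "algebraic y" "N x < e" "N y < e" shows "N (x + y) < e"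
proof -
  have "N (x + y) \<le> max (N x) (N y)" using assms by (intro N_ultra)
  also have "\<dots> < e" using assms by simp
  finally show ?thesis .
qed

lemma N_prod: "(\<And>i. i \<in> A \<Longrightarrow> algebraic (f i)) \<Longrightarrow> N (prod f A) = (\<Prod>i\<in>A. N (f i))"
  by (induction A rule: infinite_finite_induct) (auto simp: N_mult alg_prod)

lemma inv_p_lt1: "inverse (real p) < 1"
  using less_imp_inverse_less[of 1 "real p"] prime_gt_1_nat[OF prime_p] by simp

lemma pm1_ge2: "p - 1 \<ge> 2" using p_gt2 by simp

lemma N_pm1: "N (of_nat (p - 1)) = 1"
proof -
  have "\<not> int p dvd int (p - 1)"
    using p_gt2 by (auto dest!: zdvd_imp_le)
  thus ?thesis using N_int_coprime[of "int (p - 1)"] by simp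
qed

lemma teich_exists:
  assumes "\<not> p dvd a"
  shows "\<exists>z. z ^ (p - 1) = 1 \<and> N (z - of_nat a) < 1"
proof (rule ccontr)
  assume nex: "\<not> ?thesis"
  define m where "m = p - 1"
  have m2: "m \<ge> 2" using pm1_ge2 by (simp add: m_def)
  define P :: "complex poly" where "P = Polynomial.monom 1 m - 1"
  have cP: "poly.coeff P m = 1" using m2 by (simp add: P_def)
  have dP: "degree P = m"
  proof (rule antisym)
    show "degree P \<le> m" unfolding P_def
      by (rule order.trans[OF degree_diff_le_max]) (auto simp: degree_monom_le)
    show "m \<le> degree P" using cP by (intro le_degree) simp
  qed
  have lc: "lead_coeff P = 1" using cP dP by simp
  have rootP: "poly P z = 0 \<longleftrightarrow> z ^ m = 1" for z by (simp add: P_def poly_monom)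
  have dec: "Polynomial.smult (lead_coeff P) (\<Prod>z|poly P z = 0. [:-z, 1:] ^ order z P) = P"
    by (rule complex_poly_decompose)
  have "poly P (of_nat a) = poly (Polynomial.smult (lead_coeff P) (\<Prod>z|poly P z = 0. [:-z, 1:] ^ order z P)) (of_nat a)"
    using dec by simp
  also have "\<dots> = (\<Prod>z|poly P z = 0. poly ([:-z, 1:] ^ order z P) (of_nat a))"
    by (simp add: lc poly_prod)
  also have "\<dots> = (\<Prod>z|poly P z = 0. (of_nat a - z) ^ order z P)"
    by (intro prod.cong refl) (simp add: poly_power)
  finally have "poly P (of_nat a) = (\<Prod>z|poly P z = 0. (of_nat a - z) ^ order z P)" .
  moreover have "poly P (of_nat a) = of_int (int a ^ m - 1)" by (simp add: P_def poly_monom)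
  ultimately have eq: "(\<Prod>z|poly P z = 0. (of_nat a - z) ^ order z P) = of_int (int a ^ m - 1)" by simp
  have "[a ^ m = 1] (mod p)" using fermat_theorem[OF prime_p assms] by (simp add: m_def)
  hence "[int a ^ m = 1] (mod int p)" using cong_int_iff[of "a ^ m" 1 p] by simp
  hence "int p ^ 1 dvd int a ^ m - 1" by (simp add: cong_iff_dvd_diff)
  from N_int_dvd[OF this] have lt: "N (of_int (int a ^ m - 1)) < 1"
    using inv_p_lt1 by simp
  have fin: "finite {z. poly P z = 0}"
    using dP m2 by (intro poly_roots_finite) auto
  have alg: "algebraic (of_nat a - z)" if "poly P z = 0" for z
    using that rootP m2 alg_root_unity[of z m] by auto
  have "N (\<Prod>z|poly P z = 0. (of_nat a - z) ^ order z P) = (\<Prod>z|poly P z = 0. N (of_nat a - z) ^ order z P)"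
    using alg by (subst N_prod) (auto simp: alg_power N_power)
  also have "\<dots> \<ge> 1"
  proof (rule prod_ge_1, rule one_le_power)
    fix z assume z: "z \<in> {z. poly P z = 0}"
    have "\<not> N (z - of_nat a) < 1" using nex z rootP by (auto simp: m_def)
    thus "1 \<le> N (of_nat a - z)" using N_diff_comm[of z "of_nat a"] alg[of z] z rootP m2
       alg_root_unity[of z m] by auto
  qed
  finally show False using eq lt by simp
qed

lemma teich_unique:
  assumes z: "z ^ (p - 1) = 1" "N (z - of_nat a) < 1"
      and w: "w ^ (p - 1) = 1" "N (w - of_nat a) < 1"
  shows "z = w"
proof (rule ccontr)
  assume ne: "z \<noteq> w"
  define m where "m = p - 2"
  have pm: "p - 1 = Suc m" using p_gt2 by (simp add: m_def)
  have pz: "pint z" "pint w" using pint_root_unity[OF z(1)] pint_root_unity[OF w(1)] pm by auto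
  have az: "algebraic z" "algebraic w" using pz by (auto simp: pint_def)
  have dzw: "N (z - w) < 1"
  proof -
    have "z - w = (z - of_nat a) + (- (w - of_nat a))" by simp
    moreover have "N (- (w - of_nat a)) < 1" using az w by (subst N_uminus) auto
    moreover have "N ((z - of_nat a) + (- (w - of_nat a))) < 1"
      using az z \<open>N (- (w - of_nat a)) < 1\<close> by (intro N_add_lt) auto
    ultimately show ?thesis by simp
  qed
  define S where "S = (\<Sum>i<Suc m. z ^ i * w ^ (m - i))"
  have "z ^ Suc m - w ^ Suc m = (z - w) * S" unfolding S_def by (rule diff_power_eq_sum)
  hence "S = 0" using z w ne pm by simp
  have "S - of_nat (Suc m) * w ^ m = (\<Sum>i<Suc m. (z ^ i - w ^ i) * w ^ (m - i))"
    unfolding S_def by (simp add: algebra_simps sum_subtractf power_add [symmetric])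
  also have "N \<dots> \<le> N (z - w)"
  proof (rule N_sum_le)
    fix i assume "i \<in> {..<Suc m}"
    have "N (w ^ (m - i) * (z ^ i - w ^ i)) \<le> N (z - w)"
      using pz by (intro N_mult_le order.trans[OF N_power_diff]) (auto intro!: pint_alg)
    thus "algebraic ((z ^ i - w ^ i) * w ^ (m - i)) \<and> N ((z ^ i - w ^ i) * w ^ (m - i)) \<le> N (z - w)"
      using pz by (auto simp: mult.commute intro!: pint_alg)
  qed (use az N_nonneg in auto)
  finally have "N (S - of_nat (Suc m) * w ^ m) \<le> N (z - w)" .
  hence "N (- (of_nat (Suc m) * w ^ m)) \<le> N (z - w)" using \<open>S = 0\<close> by simp
  hence "N (of_nat (Suc m) * w ^ m) \<le> N (z - w)" using az
    by (subst (asm) N_uminus) (auto intro!: alg_mult alg_power)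
  hence "N (of_nat (Suc m) * w ^ m) < 1" using dzw by simp
  moreover have "N (of_nat (Suc m) * w ^ m) = 1"
  proof -
    have e1: "N (of_nat (Suc m)) = 1" by (rule N_pm1[unfolded pm])
    have e2: "N (w ^ m) = 1" using az N_power[of w m] N_root_unity[OF w(1)] pm by simp
    have "N (of_nat (Suc m) * w ^ m) = N (of_nat (Suc m)) * N (w ^ m)"
      by (rule N_mult[OF alg_of_nat alg_power[OF az(2)]])
    thus ?thesis using e1 e2 by simp
  qed
  ultimately show False by simp
qed

lemma teich_ex1: "\<not> p dvd a \<Longrightarrow> \<exists>!z. z ^ (p - 1) = 1 \<and> N (z - of_nat a) < 1"
  using teich_exists teich_unique by blast

abbreviation "tc \<equiv> teich p N"

lemma teich_props:
  assumes "\<not> p dvd a"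
  shows "tc a ^ (p - 1) = 1" "N (tc a - of_nat a) < 1"
  using theI'[OF teich_ex1[OF assms]] assms by (auto simp: teich_def)

lemma teich_eqI:
  assumes "\<not> p dvd a" "z ^ (p - 1) = 1" "N (z - of_nat a) < 1"
  shows "tc a = z"
  using teich_unique[OF teich_props[OF assms(1)] assms(2,3)] .

lemma teich_dvd: "p dvd a \<Longrightarrow> tc a = 0" by (simp add: teich_def)

lemma teich_ne0: "\<not> p dvd a \<Longrightarrow> tc a \<noteq> 0"
proof
  assume "\<not> p dvd a" "tc a = 0"
  hence "(0::complex) ^ (p - 1) = 1" using teich_props(1)[of a] by simp
  thus False using pm1_ge2 by (cases "p - 1") auto
qed

lemma pint_teich: "pint (tc a)"
  using teich_props(1)[of a] pm1_ge2 pint_root_unity[of "tc a" "p - 1"]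
  by (cases "p dvd a") (auto simp: teich_dvd)

lemma teich_1: "tc 1 = 1"
  using prime_gt_1_nat[OF prime_p] by (intro teich_eqI) auto

lemma teich_mult: "tc (a * b) = tc a * tc b"
proof (cases "p dvd a \<or> p dvd b")
  case True
  thus ?thesis by (auto simp: teich_dvd)
next
  case False
  hence nd: "\<not> p dvd (a * b)" using prime_p by (simp add: prime_dvd_mult_iff)
  have pa: "pint (tc a)" "pint (tc b)" using pint_teich by auto
  show ?thesis
  proof (rule teich_eqI[OF nd])
    show "(tc a * tc b) ^ (p - 1) = 1" using False teich_props by (simp add: power_mult_distrib)
    have "tc a * tc b - of_nat (a * b) = tc a * (tc b - of_nat b) + of_nat b * (tc a - of_nat a)"
      by (simp add: algebra_simps)
    moreover have "N (tc a * (tc b - of_nat b)) < 1"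
      using pa teich_props(2)[of b] False
      by (intro le_less_trans[OF N_mult_le]) (auto intro!: pint_alg)
    moreover have "N (of_nat b * (tc a - of_nat a)) < 1"
      using pa teich_props(2)[of a] False
      by (intro le_less_trans[OF N_mult_le]) (auto intro!: pint_alg)
    ultimately show "N (tc a * tc b - of_nat (a * b)) < 1"
      using pa by (auto intro!: N_add_lt pint_alg)
  qed
qed

lemma teich_cong:
  assumes "[a = b] (mod p)"
  shows "tc a = tc b"
proof (cases "p dvd b")
  case True
  hence "p dvd a" using assms by (simp add: cong_dvd_iff)
  thus ?thesis using True by (simp add: teich_dvd)
next
  case False
  hence na: "\<not> p dvd a" using assms by (simp add: cong_dvd_iff)
  show ?thesis
  proof (rule teich_eqI[OF na teich_props(1)[OF False]])
    have "tc b - of_nat a = (tc b - of_nat b) + (of_nat b - of_nat a)" by simp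
    moreover have "N (of_nat b - of_nat a) < 1"
    proof -
      have "N (of_nat b - of_nat a) \<le> inverse (real p)"
        using N_cong[of b a 1] assms by (simp add: cong_sym_eq)
      also have "\<dots> < 1" by (rule inv_p_lt1)
      finally show ?thesis .
    qed
    moreover have "algebraic (tc b)" using pint_teich pint_alg by auto
    moreover have "N ((tc b - of_nat b) + (of_nat b - of_nat a)) < 1"
      using teich_props(2)[OF False] calculation by (intro N_add_lt) auto
    ultimately show "N (tc b - of_nat a) < 1" by simp
  qed
qed

lemma N_pow_p:
  assumes "pint u" "pint v"
  shows "N (u ^ p - v ^ p) \<le> max (N (u - v) ^ p) (N (u - v) * inverse (real p))"
proof -
  define d where "d = u - v"
  have pd: "pint d" using assms by (auto simp: d_def)
  have Nd: "0 \<le> N d" "N d \<le> 1" using pd N_nonneg by (auto simp: pint_def)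
  define B where "B = max (N d ^ p) (N d * inverse (real p))"
  have "0 \<le> N d ^ p" using Nd by simp
  hence B0: "B \<ge> 0" by (simp add: B_def le_max_iff_disj)
  have "u ^ p = (d + v) ^ p" by (simp add: d_def)
  also have "\<dots> = (\<Sum>k\<le>p. of_nat (p choose k) * d ^ k * v ^ (p - k))" by (rule binomial_ring)
  also have "\<dots> = v ^ p + (\<Sum>k<p. of_nat (p choose Suc k) * d ^ Suc k * v ^ (p - Suc k))"
    by (subst sum.atMost_shift) simp
  finally have eq: "u ^ p - v ^ p = (\<Sum>k<p. of_nat (p choose Suc k) * d ^ Suc k * v ^ (p - Suc k))"
    by simp
  have "N (\<Sum>k<p. of_nat (p choose Suc k) * d ^ Suc k * v ^ (p - Suc k)) \<le> B"
  proof (rule N_sum_le[OF _ B0])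
    fix k assume k: "k \<in> {..<p}"
    define t where "t = of_nat (p choose Suc k) * d ^ Suc k * v ^ (p - Suc k)"
    have pt: "pint t" using pd assms by (auto simp: t_def)
    have "N t \<le> B"
    proof (cases "Suc k = p")
      case True
      hence "t = d ^ p" by (simp add: t_def)
      thus ?thesis using pd by (simp add: N_power B_def pint_def)
    next
      case False
      have "int p ^ 1 dvd int (p choose Suc k)"
        using dvd_choose_prime[of "Suc k" p] False k prime_p by auto
      hence c: "N (of_nat (p choose Suc k)) \<le> inverse (real p)"
        using N_int_dvd[of 1 "int (p choose Suc k)"] by simp
      have "N t = N (of_nat (p choose Suc k)) * (N d ^ Suc k * N (v ^ (p - Suc k)))"
        using pd assms by (simp add: t_def N_mult N_power pint_def alg_power alg_mult mult.assoc)
      also have "\<dots> \<le> inverse (real p) * (N d * 1)"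
      proof -
        have pv: "pint (v ^ (p - Suc k))" using assms by auto
        have "N d ^ Suc k \<le> N d" using Nd by (simp add: power_le_one mult_left_le)
        moreover have v1: "N (v ^ (p - Suc k)) \<le> 1" "N (v ^ (p - Suc k)) \<ge> 0"
          using pv N_nonneg by (auto simp: pint_def)
        ultimately have X: "N d ^ Suc k * N (v ^ (p - Suc k)) \<le> N d * 1"
          using Nd by (intro mult_mono) auto
        have Y: "0 \<le> N d ^ Suc k * N (v ^ (p - Suc k))"
          using Nd v1 by auto
        show ?thesis by (rule mult_mono[OF c X _ Y]) simp
      qed
      finally show ?thesis by (simp add: B_def mult.commute)
    qed
    thus "algebraic (of_nat (p choose Suc k) * d ^ Suc k * v ^ (p - Suc k)) \<and>
          N (of_nat (p choose Suc k) * d ^ Suc k * v ^ (p - Suc k)) \<le> B"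
      using pt by (simp add: t_def pint_def)
  qed
  thus ?thesis using eq by (simp add: B_def d_def)
qed

lemma teich_approx:
  assumes na: "\<not> p dvd a" and e: "e > 0"
  shows "\<exists>r. N (tc a - of_nat a ^ (p ^ r)) < e"
proof -
  define t where "t = tc a"
  define \<delta> where "\<delta> = N (t - of_nat a)"
  have pt: "pint t" using pint_teich by (simp add: t_def)
  have d1: "\<delta> < 1" "\<delta> \<ge> 0" using teich_props(2)[OF na] pt N_nonneg
    by (auto simp: \<delta>_def t_def intro!: pint_alg)
  define \<rho> where "\<rho> = max (\<delta> ^ (p - 1)) (inverse (real p))"
  have "\<delta> ^ (p - 1) < 1" using d1 pm1_ge2 by (simp add: power_less_one_iff)
  hence r1: "\<rho> < 1" "\<rho> \<ge> 0" using inv_p_lt1 by (auto simp: \<rho>_def le_max_iff_disj)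
  have tp: "t ^ p = t"
  proof -
    have "t ^ p = t * t ^ (p - 1)" using p_gt2 by (cases p) auto
    thus ?thesis using teich_props(1)[OF na] by (simp add: t_def)
  qed
  have key: "N (t - of_nat a ^ (p ^ r)) \<le> \<delta> * \<rho> ^ r" for r
  proof (induction r)
    case 0 thus ?case by (simp add: \<delta>_def)
  next
    case (Suc r)
    define w where "w = (of_nat a :: complex) ^ (p ^ r)"
    define d where "d = N (t - w)"
    have pw: "pint w" unfolding w_def by (intro pint_power pint_nat)
    have dd: "d \<le> \<delta> * \<rho> ^ r" "d \<ge> 0" using Suc pt pw N_nonneg
      by (auto simp: d_def w_def intro!: pint_alg)
    have "\<rho> ^ r \<le> 1" using r1 by (simp add: power_le_one)
    hence "\<delta> * \<rho> ^ r \<le> \<delta>" using d1 by (simp add: mult_left_le)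
    hence dl: "d \<le> \<delta>" using dd by simp
    have "of_nat a ^ (p ^ Suc r) = w ^ p" by (simp add: w_def power_mult[symmetric] mult.commute)
    hence "N (t - of_nat a ^ (p ^ Suc r)) = N (t ^ p - w ^ p)" using tp by simp
    also have "\<dots> \<le> max (d ^ p) (d * inverse (real p))" unfolding d_def by (rule N_pow_p[OF pt pw])
    also have "\<dots> \<le> d * \<rho>"
    proof (rule max.boundedI)
      have "d ^ p = d * d ^ (p - 1)" using p_pos by (cases p) auto
      also have "\<dots> \<le> d * \<delta> ^ (p - 1)" using dd dl by (intro mult_left_mono power_mono) auto
      also have "\<dots> \<le> d * \<rho>" using dd by (intro mult_left_mono) (auto simp: \<rho>_def)
      finally show "d ^ p \<le> d * \<rho>" .
      show "d * inverse (real p) \<le> d * \<rho>" using dd by (intro mult_left_mono) (auto simp: \<rho>_def)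
    qed
    also have "\<dots> \<le> \<delta> * \<rho> ^ r * \<rho>" using dd r1 by (intro mult_right_mono) auto
    finally show ?case by (simp add: mult_ac)
  qed
  show ?thesis
  proof (cases "\<delta> = 0")
    case True
    hence "N (tc a - of_nat a ^ (p ^ 0)) < e" using key[of 0] e by (simp add: t_def)
    thus ?thesis by blast
  next
    case False
    hence dp: "\<delta> > 0" using d1 by simp
    obtain r where "\<rho> ^ r < e / \<delta>" using real_arch_pow_inv[of "e / \<delta>" \<rho>] r1 e dp by auto
    hence "\<delta> * \<rho> ^ r < e" using dp by (simp add: field_simps)
    hence "N (tc a - of_nat a ^ (p ^ r)) < e" using key[of r] by (simp add: t_def)
    thus ?thesis by blast
  qed
qed

end


lemma dchar_periodic_mult: "dirichlet_char m \<chi> \<Longrightarrow> \<chi> (a + m * q) = \<chi> a"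
proof (induction q)
  case (Suc q)
  have "\<chi> (a + m * Suc q) = \<chi> ((a + m * q) + m)" by (simp add: algebra_simps)
  also have "\<dots> = \<chi> (a + m * q)" using Suc.prems by (simp add: dirichlet_char_def)
  finally show ?case using Suc by simp
qed simp

lemma dchar_mod: "dirichlet_char m \<chi> \<Longrightarrow> \<chi> a = \<chi> (a mod m)"
  using dchar_periodic_mult[of m \<chi> "a mod m" "a div m"] by simp

lemma dchar_cong: "dirichlet_char m \<chi> \<Longrightarrow> [a = b] (mod m) \<Longrightarrow> \<chi> a = \<chi> b"
  using dchar_mod[of m \<chi> a] dchar_mod[of m \<chi> b] by (simp add: cong_def)

lemma dchar_mult: "dirichlet_char m \<chi> \<Longrightarrow> \<chi> (a * b) = \<chi> a * \<chi> b"
  by (simp add: dirichlet_char_def)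

lemma dchar_1: "dirichlet_char m \<chi> \<Longrightarrow> \<chi> 1 = 1"
  by (simp add: dirichlet_char_def)

lemma dchar_1': "dirichlet_char m \<chi> \<Longrightarrow> \<chi> (Suc 0) = 1"
  by (simp add: dirichlet_char_def)

lemma dchar_power: "dirichlet_char m \<chi> \<Longrightarrow> \<chi> (a ^ n) = \<chi> a ^ n"
  by (induction n) (simp_all add: dchar_mult dchar_1')

lemma dchar_zero_iff: "dirichlet_char m \<chi> \<Longrightarrow> \<chi> a = 0 \<longleftrightarrow> \<not> coprime a m"
  by (simp add: dirichlet_char_def)

lemma dchar_pos: "dirichlet_char m \<chi> \<Longrightarrow> m > 0"
  by (simp add: dirichlet_char_def)

lemma dchar_root: "dirichlet_char m \<chi> \<Longrightarrow> coprime a m \<Longrightarrow> \<chi> a ^ totient m = 1"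
proof -
  assume d: "dirichlet_char m \<chi>" and c: "coprime a m"
  have "\<chi> a ^ totient m = \<chi> (a ^ totient m)"
    using d by (simp add: dchar_power)
  also have "\<dots> = \<chi> 1" using d euler_theorem[OF c] by (rule dchar_cong)
  finally show ?thesis using d by (simp add: dchar_1 dchar_1')
qed

lemma lift_coprime:
  fixes M F x :: nat
  assumes M: "M > 0" and FM: "F dvd M" and cx: "coprime x F"
  shows "\<exists>b. [b = x] (mod F) \<and> coprime b M"
proof -
  define S where "S = {q. prime q \<and> q dvd M \<and> \<not> q dvd x}"
  have finS: "finite S" using M by (intro finite_subset[of S "{..M}"]) (auto simp: S_def dest: dvd_imp_le)
  define t where "t = \<Prod>S"
  define b where "b = x + F * t"
  have dvt: "q dvd t \<longleftrightarrow> q \<in> S" if "prime q" for q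
  proof -
    have "q dvd t \<longleftrightarrow> (\<exists>s\<in>S. q dvd s)"
      unfolding t_def using prime_dvd_prod_iff[OF finS that, of id] by simp
    also have "\<dots> \<longleftrightarrow> q \<in> S"
      using that by (auto simp: S_def dest: primes_dvd_imp_eq)
    finally show ?thesis .
  qed
  have "coprime b M"
  proof (rule ccontr)
    assume "\<not> coprime b M"
    hence "gcd b M \<noteq> 1" unfolding coprime_iff_gcd_eq_1 .
    then obtain q where q: "prime q" "q dvd gcd b M" using prime_factor_nat[of "gcd b M"] by blast
    have qb: "q dvd b" using q(2) by (rule dvd_trans) simp
    have qM: "q dvd M" using q(2) by (rule dvd_trans) simp
    show False
    proof (cases "q dvd x")
      case True
      hence "q \<notin> S" unfolding S_def by blast
      hence "\<not> q dvd t" using dvt[OF q(1)] by blast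
      moreover have "\<not> q dvd F"
      proof
        assume "q dvd F"
        hence "q dvd gcd x F" using True by (rule gcd_greatest[rotated])
        hence "q dvd 1" using cx unfolding coprime_iff_gcd_eq_1 by simp
        thus False using q(1) by simp
      qed
      ultimately have "\<not> q dvd F * t" using prime_dvd_mult_iff[OF q(1)] by blast
      moreover have "q dvd F * t" using qb True unfolding b_def using dvd_add_right_iff by blast
      ultimately show False by simp
    next
      case False
      hence "q \<in> S" using q qM unfolding S_def by blast
      hence "q dvd t" using dvt[OF q(1)] by blast
      hence "q dvd F * t" by simp
      hence "q dvd x" using qb unfolding b_def using dvd_add_left_iff by blast
      thus False using False by simp
    qed
  qed
  moreover have "[b = x] (mod F)" by (simp add: b_def cong_def)
  ultimately show ?thesis by blast
qed

definition ind_mod :: "nat \<Rightarrow> (nat \<Rightarrow> complex) \<Rightarrow> nat \<Rightarrow> bool" where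
  "ind_mod M g d \<longleftrightarrow> d dvd M \<and> (\<forall>a. coprime a M \<and> [a = 1] (mod d) \<longrightarrow> g a = 1)"

lemma ind_mod_welldef:
  assumes g: "dirichlet_char M g" and F: "ind_mod M g F"
    and b: "coprime b M" "coprime b' M" "[b = b'] (mod F)"
  shows "g b = g b'"
proof -
  obtain c where c: "[b * c = 1] (mod M)" using cong_solve_coprime_nat[OF b(1)] by auto
  have "coprime (b * c) M" using cong_imp_coprime[OF cong_sym[OF c]] by simp
  hence cc: "coprime c M" by simp
  have "g (b * c) = g 1" using g c by (rule dchar_cong)
  hence gbc: "g b * g c = 1" using g by (simp add: dchar_mult dchar_1')
  have FM: "F dvd M" using F by (simp add: ind_mod_def)
  have "[b' * c = b * c] (mod F)" by (rule cong_mult[OF cong_sym[OF b(3)] cong_refl])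
  also have "[b * c = 1] (mod F)" using c FM by (rule cong_dvd_modulus_nat)
  finally have "g (b' * c) = 1" using F b cc by (simp add: ind_mod_def)
  hence "g b' * g c = 1" using g by (simp add: dchar_mult)
  hence "g b' = g b' * (g b * g c)" using gbc by simp
  also have "\<dots> = (g b' * g c) * g b" by (simp add: mult_ac)
  finally show ?thesis using \<open>g b' * g c = 1\<close> by simp
qed

definition prim_spec :: "nat \<Rightarrow> (nat \<Rightarrow> complex) \<Rightarrow> nat \<Rightarrow> (nat \<Rightarrow> complex) \<Rightarrow> bool" where
  "prim_spec M g F \<psi> \<longleftrightarrow> F dvd M \<and> primitive_char F \<psi> \<and> (\<forall>a. coprime a M \<longrightarrow> \<psi> a = g a)"

lemma prim_exists:
  assumes g: "dirichlet_char M g"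
  shows "\<exists>F \<psi>. prim_spec M g F \<psi>"
proof -
  have M: "M > 0" using g by (rule dchar_pos)
  have indM: "ind_mod M g M" unfolding ind_mod_def
  proof (intro conjI allI impI dvd_refl)
    fix a assume "coprime a M \<and> [a = 1] (mod M)"
    hence "g a = g 1" using dchar_cong[OF g, of a 1] by simp
    thus "g a = 1" using g by (simp add: dchar_1 dchar_1')
  qed
  define F where "F = (LEAST d. ind_mod M g d)"
  have indF: "ind_mod M g F" unfolding F_def using indM by (rule LeastI)
  have FM: "F dvd M" using indF by (simp add: ind_mod_def)
  have F0: "F > 0" using FM M by (cases F) auto
  define \<psi> where "\<psi> x = (if coprime x F then g (SOME b. [b = x] (mod F) \<and> coprime b M) else 0)" for x
  have psi_eq: "\<psi> x = g b" if "coprime x F" "[b = x] (mod F)" "coprime b M" for x b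
  proof -
    have ex: "\<exists>b. [b = x] (mod F) \<and> coprime b M" using that by blast
    define b0 where "b0 = (SOME b. [b = x] (mod F) \<and> coprime b M)"
    have b0: "[b0 = x] (mod F)" "coprime b0 M" using someI_ex[OF ex] by (auto simp: b0_def)
    have "g b0 = g b" using g indF b0(2) that(3)
      by (rule ind_mod_welldef) (rule cong_trans[OF b0(1) cong_sym[OF that(2)]])
    thus ?thesis using that(1) by (simp add: \<psi>_def b0_def)
  qed
  have psi_ex: "\<exists>b. [b = x] (mod F) \<and> coprime b M \<and> \<psi> x = g b" if "coprime x F" for x
    using lift_coprime[OF M FM that] psi_eq[OF that] by blast
  have psi_0: "\<psi> x = 0" if "\<not> coprime x F" for x using that by (simp add: \<psi>_def)
  have dc: "dirichlet_char F \<psi>"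
    unfolding dirichlet_char_def
  proof (intro conjI allI)
    show "F > 0" by (rule F0)
  next
    fix a b
    show "\<psi> (a * b) = \<psi> a * \<psi> b"
    proof (cases "coprime a F \<and> coprime b F")
      case True
      obtain ba where ba: "[ba = a] (mod F)" "coprime ba M" "\<psi> a = g ba" using psi_ex True by blast
      obtain bb where bb: "[bb = b] (mod F)" "coprime bb M" "\<psi> b = g bb" using psi_ex True by blast
      have "\<psi> (a * b) = g (ba * bb)"
        using True ba bb by (intro psi_eq cong_mult) auto
      thus ?thesis using ba bb g by (simp add: dchar_mult)
    next
      case False
      thus ?thesis using psi_0 by auto
    qed
  next
    fix a
    have cpF: "coprime (a + F) F \<longleftrightarrow> coprime a F"
      by (rule coprime_cong_cong_left) (simp add: cong_def)
    show "\<psi> (a + F) = \<psi> a"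
    proof (cases "coprime a F")
      case True
      obtain ba where ba: "[ba = a] (mod F)" "coprime ba M" "\<psi> a = g ba" using psi_ex True by blast
      have ca: "coprime (a + F) F" using True cpF by simp
      have "[ba = a + F] (mod F)" using ba(1) by (simp add: cong_def)
      thus ?thesis using psi_eq[OF ca _ ba(2)] ba(3) by simp
    next
      case False
      hence "\<not> coprime (a + F) F" using cpF by simp
      thus ?thesis using False psi_0 by simp
    qed
  next
    fix a
    show "\<psi> a = 0 \<longleftrightarrow> \<not> coprime a F"
    proof (cases "coprime a F")
      case True
      obtain ba where ba: "[ba = a] (mod F)" "coprime ba M" "\<psi> a = g ba" using psi_ex True by blast
      have "g ba \<noteq> 0" using g ba(2) by (simp add: dchar_zero_iff)
      thus ?thesis using ba True by simp
    qed (simp add: psi_0)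
  next
    show "\<psi> 1 = 1" using psi_eq[of 1 1] g by (simp add: dchar_1 dchar_1')
  qed
  have prim: "primitive_char F \<psi>"
    unfolding primitive_char_def
  proof (intro conjI dc notI)
    assume "\<exists>d. d dvd F \<and> d < F \<and> (\<forall>a. coprime a F \<and> [a = 1] (mod d) \<longrightarrow> \<psi> a = 1)"
    then obtain d where d: "d dvd F" "d < F" "\<And>a. coprime a F \<Longrightarrow> [a = 1] (mod d) \<Longrightarrow> \<psi> a = 1"
      by blast
    have "ind_mod M g d" unfolding ind_mod_def
    proof (intro conjI allI impI)
      show "d dvd M" using d(1) FM by (rule dvd_trans)
      fix a assume a: "coprime a M \<and> [a = 1] (mod d)"
      have caF: "coprime a F" using a coprime_divisors[OF dvd_refl FM] by blast
      have "\<psi> a = g a" using psi_eq[OF caF cong_refl] a by simp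
      thus "g a = 1" using d(3)[OF caF] a by simp
    qed
    hence "F \<le> d" unfolding F_def by (rule Least_le)
    thus False using d(2) by simp
  qed
  have "\<forall>a. coprime a M \<longrightarrow> \<psi> a = g a"
    using coprime_divisors[OF dvd_refl FM] psi_eq by (auto intro: cong_refl)
  thus ?thesis using FM prim unfolding prim_spec_def by blast
qed

lemma prim_spec_vals:
  assumes g: "dirichlet_char M g" and s: "prim_spec M g F \<psi>" and c: "coprime x F"
  shows "\<exists>b. [b = x] (mod F) \<and> coprime b M \<and> \<psi> x = g b"
proof -
  have M: "M > 0" using g by (rule dchar_pos)
  have FM: "F dvd M" and dc: "dirichlet_char F \<psi>" and ag: "\<And>a. coprime a M \<Longrightarrow> \<psi> a = g a"
    using s by (auto simp: prim_spec_def primitive_char_def)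
  obtain b where b: "[b = x] (mod F)" "coprime b M" using lift_coprime[OF M FM c] by blast
  have "\<psi> x = \<psi> b" using dc cong_sym[OF b(1)] by (rule dchar_cong)
  thus ?thesis using b ag by auto
qed

lemma prim_unique_F:
  assumes g: "dirichlet_char M g" and s1: "prim_spec M g F1 \<psi>1" and s2: "prim_spec M g F2 \<psi>2"
  shows "F1 = gcd F1 F2"
proof -
  have M: "M > 0" using g by (rule dchar_pos)
  have F1M: "F1 dvd M" and pc1: "primitive_char F1 \<psi>1" and ag1: "\<And>a. coprime a M \<Longrightarrow> \<psi>1 a = g a"
    using s1 by (auto simp: prim_spec_def)
  have F2M: "F2 dvd M" and pc2: "primitive_char F2 \<psi>2" and ag2: "\<And>a. coprime a M \<Longrightarrow> \<psi>2 a = g a"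
    using s2 by (auto simp: prim_spec_def)
  have dc1: "dirichlet_char F1 \<psi>1" and dc2: "dirichlet_char F2 \<psi>2"
    using pc1 pc2 by (auto simp: primitive_char_def)
  have F1p: "F1 > 0" and F2p: "F2 > 0" using dc1 dc2 by (auto dest: dchar_pos)
  define d where "d = gcd F1 F2"
  have triv: "\<psi>1 a = 1" if a: "coprime a F1" "[a = 1] (mod d)" for a
  proof -
    obtain u v :: int where uv: "u * int F1 + v * int F2 = gcd (int F1) (int F2)"
      using bezout_int by blast
    have "[int a = int 1] (mod int d)" using a(2) by (simp only: cong_int_iff)
    hence "int d dvd int a - 1" by (simp add: cong_iff_dvd_diff)
    then obtain s where s: "int a - 1 = int d * s" by (elim dvdE)
    define b0 where "b0 = 1 + v * int F2 * s"
    have dd: "int d = u * int F1 + v * int F2" using uv by (simp add: d_def)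
    have "b0 - int a = v * int F2 * s - int d * s" using s by (simp add: b0_def algebra_simps)
    also have "\<dots> = - (u * int F1 * s)" unfolding dd by (simp add: algebra_simps)
    finally have "b0 - int a = - (u * int F1 * s)" .
    hence c01: "[b0 = int a] (mod int F1)" by (simp add: cong_iff_dvd_diff)
    have c02: "[b0 = 1] (mod int F2)" by (simp add: b0_def cong_iff_dvd_diff)
    define b1 where "b1 = nat (b0 mod (int F1 * int F2))"
    have "int b1 = b0 mod (int F1 * int F2)" using F1p F2p by (simp add: b1_def)
    hence c12: "[int b1 = b0] (mod int F1 * int F2)" by (simp add: cong_def)
    have "[int b1 = int a] (mod int F1)"
      using cong_trans[OF cong_dvd_modulus[OF c12, of "int F1"] c01] by simp
    hence b1a: "[b1 = a] (mod F1)" by (simp only: cong_int_iff)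
    have "[int b1 = 1] (mod int F2)"
      using cong_trans[OF cong_dvd_modulus[OF c12, of "int F2"] c02] by simp
    hence "[int b1 = int 1] (mod int F2)" by simp
    hence b11: "[b1 = 1] (mod F2)" by (simp only: cong_int_iff)
    have cb1: "coprime b1 (F1 * F2)"
      using cong_imp_coprime[OF cong_sym[OF b1a] a(1)]
            cong_imp_coprime[OF cong_sym[OF b11]] by simp
    have ldvd: "lcm F1 F2 dvd F1 * F2" by (intro lcm_least) auto
    have cbl: "coprime b1 (lcm F1 F2)" using coprime_divisors[OF dvd_refl ldvd cb1] .
    have lM: "lcm F1 F2 dvd M" using F1M F2M by (rule lcm_least)
    obtain b where b: "[b = b1] (mod lcm F1 F2)" "coprime b M"
      using lift_coprime[OF M lM cbl] by blast
    have ba: "[b = a] (mod F1)"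
      using cong_trans[OF cong_dvd_modulus_nat[OF b(1), of F1] b1a] by simp
    have bb: "[b = 1] (mod F2)"
      using cong_trans[OF cong_dvd_modulus_nat[OF b(1), of F2] b11] by simp
    have "\<psi>1 a = \<psi>1 b" using dc1 cong_sym[OF ba] by (rule dchar_cong)
    also have "\<dots> = \<psi>2 b" using ag1 ag2 b(2) by simp
    also have "\<dots> = \<psi>2 1" using dc2 bb by (rule dchar_cong)
    finally show ?thesis using dc2 by (simp add: dchar_1 dchar_1')
  qed
  have "d dvd F1" by (simp add: d_def)
  moreover have "\<not> d < F1" using pc1 triv \<open>d dvd F1\<close> unfolding primitive_char_def by blast
  moreover have "d \<le> F1" using \<open>d dvd F1\<close> F1p by (rule dvd_imp_le)
  ultimately show ?thesis by (simp add: d_def)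
qed

lemma prim_unique:
  assumes g: "dirichlet_char M g" and s1: "prim_spec M g F1 \<psi>1" and s2: "prim_spec M g F2 \<psi>2"
  shows "F1 = F2 \<and> \<psi>1 = \<psi>2"
proof -
  have e: "F1 = F2" using prim_unique_F[OF g s1 s2] prim_unique_F[OF g s2 s1] by (simp add: gcd.commute)
  have dc1: "dirichlet_char F1 \<psi>1" and dc2: "dirichlet_char F2 \<psi>2"
    using s1 s2 by (auto simp: primitive_char_def prim_spec_def)
  have "\<psi>1 x = \<psi>2 x" for x
  proof (cases "coprime x F1")
    case True
    obtain b where b: "[b = x] (mod F1)" "coprime b M" "\<psi>1 x = g b"
      using prim_spec_vals[OF g s1 True] by blast
    have "\<psi>2 x = \<psi>2 b" using dc2 cong_sym[OF b(1)] e by (intro dchar_cong) auto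
    also have "\<dots> = g b" using s2 b(2) by (simp add: prim_spec_def)
    finally show ?thesis using b by simp
  next
    case False
    have "\<psi>1 x = 0" "\<psi>2 x = 0" using dc1 dc2 e False by (simp_all add: dchar_zero_iff)
    thus ?thesis by simp
  qed
  thus ?thesis using e by auto
qed

lemma assoc_prim_spec:
  assumes g: "dirichlet_char M g"
  shows "prim_spec M g (fst (assoc_prim M g)) (snd (assoc_prim M g))"
proof -
  obtain F \<psi> where s: "prim_spec M g F \<psi>" using prim_exists[OF g] by blast
  have "assoc_prim M g = (F, \<psi>)"
    unfolding assoc_prim_def
  proof (rule the_equality)
    show "case (F, \<psi>) of (F, \<psi>) \<Rightarrow> F dvd M \<and> primitive_char F \<psi> \<and> (\<forall>a. coprime a M \<longrightarrow> \<psi> a = g a)"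
      using s by (simp add: prim_spec_def)
    fix x assume "case x of (F, \<psi>) \<Rightarrow> F dvd M \<and> primitive_char F \<psi> \<and> (\<forall>a. coprime a M \<longrightarrow> \<psi> a = g a)"
    hence "prim_spec M g (fst x) (snd x)" by (cases x) (simp add: prim_spec_def)
    thus "x = (F, \<psi>)" using prim_unique[OF g _ s] by (cases x) auto
  qed
  thus ?thesis using s by simp
qed


definition XS :: "(nat \<Rightarrow> complex) \<Rightarrow> nat \<Rightarrow> complex fps" where
  "XS \<psi> M = (\<Sum>a=1..M. fps_const (2 * (-1) ^ a * \<psi> a) * fps_exp (of_nat a))"

definition ssum :: "(nat \<Rightarrow> complex) \<Rightarrow> nat \<Rightarrow> nat \<Rightarrow> complex" where
  "ssum \<psi> M n = (\<Sum>a=1..M. (-1) ^ a * \<psi> a * of_nat a ^ n)"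

lemma geo_telescope:
  fixes e :: "'a :: comm_ring_1"
  shows "(e + 1) * (\<Sum>j<L. (-1) ^ j * e ^ j) = 1 - (-1) ^ L * e ^ L"
  by (induction L) (simp_all add: algebra_simps)

lemma XS_mult:
  assumes dc: "dirichlet_char F \<psi>" and oF: "odd F"
  shows "XS \<psi> (F * L) = XS \<psi> F * (\<Sum>j<L. (-1) ^ j * fps_exp (of_nat F) ^ j)"
proof (induction L)
  case 0 show ?case by (simp add: XS_def)
next
  case (Suc L)
  have "XS \<psi> (F * Suc L) = XS \<psi> (F * L) +
        (\<Sum>a=F * L + 1..F * L + F. fps_const (2 * (-1) ^ a * \<psi> a) * fps_exp (of_nat a))"
    unfolding XS_def by (subst sum.ub_add_nat[symmetric]) (simp_all add: add.commute)
  also have "(\<Sum>a=F * L + 1..F * L + F. fps_const (2 * (-1) ^ a * \<psi> a) * fps_exp (of_nat a)) =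
             (\<Sum>a=1..F. fps_const (2 * (-1) ^ (a + F * L) * \<psi> (a + F * L)) * fps_exp (of_nat (a + F * L)))"
    using sum.shift_bounds_cl_nat_ivl[of "\<lambda>a. fps_const (2 * (-1) ^ a * \<psi> a) * fps_exp (of_nat a)" 1 "F * L" F]
    by (simp add: add.commute)
  also have "\<dots> = (\<Sum>a=1..F. fps_const (2 * (-1) ^ a * \<psi> a) * fps_exp (of_nat a) *
                    ((-1) ^ L * fps_exp (of_nat F) ^ L))"
  proof (intro sum.cong refl)
    fix a
    have "\<psi> (a + F * L) = \<psi> a" using dc by (rule dchar_periodic_mult)
    moreover have "(-1 :: complex) ^ (a + F * L) = (-1) ^ a * (-1) ^ L"
      using oF by (simp add: power_add power_mult)
    moreover have "fps_exp (of_nat (a + F * L) :: complex) = fps_exp (of_nat a) * fps_exp (of_nat F) ^ L"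
      by (simp add: fps_exp_power_mult fps_exp_add_mult[symmetric] algebra_simps)
    moreover have "fps_const ((-1 :: complex) ^ L) = (-1) ^ L"
      by (simp add: fps_const_neg[symmetric] fps_const_power[symmetric])
    ultimately show "fps_const (2 * (-1) ^ (a + F * L) * \<psi> (a + F * L)) * fps_exp (of_nat (a + F * L)) =
        fps_const (2 * (-1) ^ a * \<psi> a) * fps_exp (of_nat a) * ((-1) ^ L * fps_exp (of_nat F) ^ L)"
      by (simp add: fps_const_mult[symmetric] mult_ac del: fps_const_mult)
  qed
  also have "\<dots> = XS \<psi> F * ((-1) ^ L * fps_exp (of_nat F) ^ L)"
    by (simp add: XS_def sum_distrib_right)
  finally show ?case using Suc by (simp add: algebra_simps)
qed

definition Gf :: "(nat \<Rightarrow> complex) \<Rightarrow> nat \<Rightarrow> complex fps" where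
  "Gf \<psi> F = XS \<psi> F / (fps_exp (of_nat F) + 1)"

lemma gen_euler_Gf: "gen_euler F \<psi> n = fact n * Gf \<psi> F $ n"
  by (simp add: gen_euler_def Gf_def XS_def)

lemma Gf_mult:
  assumes dc: "dirichlet_char F \<psi>" and oF: "odd F" and oL: "odd L"
  shows "Gf \<psi> F * (fps_exp (of_nat (F * L)) + 1) = XS \<psi> (F * L)"
proof -
  define E where "E = fps_exp (of_nat F :: complex)"
  have E0: "(E + 1) $ 0 \<noteq> 0" by (simp add: E_def)
  have GE: "Gf \<psi> F * (E + 1) = XS \<psi> F"
    unfolding Gf_def E_def[symmetric] using E0
    by (simp add: fps_divide_unit mult.assoc inverse_mult_eq_1)
  have "fps_exp (of_nat (F * L)) + 1 = (E + 1) * (\<Sum>j<L. (-1) ^ j * E ^ j)"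
    using geo_telescope[of E L] oL by (simp add: E_def fps_exp_power_mult mult.commute)
  hence "Gf \<psi> F * (fps_exp (of_nat (F * L)) + 1) = XS \<psi> F * (\<Sum>j<L. (-1) ^ j * E ^ j)"
    using GE by (simp add: mult.assoc[symmetric])
  also have "\<dots> = XS \<psi> (F * L)" using XS_mult[OF dc oF] by (simp add: E_def)
  finally show ?thesis .
qed

lemma euler_rec:
  assumes dc: "dirichlet_char F \<psi>" and oF: "odd F" and oL: "odd L"
  shows "gen_euler F \<psi> n + (\<Sum>i\<le>n. of_nat (n choose i) * of_nat (F * L) ^ (n - i) * gen_euler F \<psi> i)
         = 2 * ssum \<psi> (F * L) n"
proof -
  define G where "G = Gf \<psi> F"
  define M where "M = F * L"
  have "(G * (fps_exp (of_nat M) + 1)) $ n = XS \<psi> M $ n"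
    using Gf_mult[OF dc oF oL] by (simp add: G_def M_def)
  hence eq: "G $ n + (\<Sum>i=0..n. G $ i * (of_nat M ^ (n - i) / fact (n - i))) = XS \<psi> M $ n"
    by (simp add: algebra_simps fps_mult_nth)
  have L1: "fact n * (G $ n + (\<Sum>i=0..n. G $ i * (of_nat M ^ (n - i) / fact (n - i)))) =
        gen_euler F \<psi> n + (\<Sum>i\<le>n. of_nat (n choose i) * of_nat M ^ (n - i) * gen_euler F \<psi> i)"
  proof -
    have "fact n * (G $ i * (of_nat M ^ (n - i) / fact (n - i))) =
          of_nat (n choose i) * of_nat M ^ (n - i) * gen_euler F \<psi> i" if "i \<le> n" for i
    proof -
      have "(of_nat (n choose i) :: complex) = fact n / (fact i * fact (n - i))"
        using that by (rule binomial_fact)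
      thus ?thesis by (simp add: gen_euler_Gf G_def field_simps)
    qed
    thus ?thesis
      by (simp add: distrib_left sum_distrib_left gen_euler_Gf G_def atLeast0AtMost)
  qed
  have L2: "fact n * XS \<psi> M $ n = 2 * ssum \<psi> M n"
    by (simp add: XS_def ssum_def fps_sum_nth sum_distrib_left sum_distrib_right field_simps)
  show ?thesis using L1 L2 eq by (simp add: M_def)
qed


lemma sum_atMost_split: "(\<Sum>i\<le>(n::nat). f i) = (\<Sum>i<n. f i) + (f n :: 'a :: comm_monoid_add)"
  by (induction n) (simp_all add: add_ac)

context padic
begin

lemma pint_dchar: "dirichlet_char m \<chi> \<Longrightarrow> pint (\<chi> a)"
proof (cases "coprime a m")
  case True
  assume d: "dirichlet_char m \<chi>"
  have "m > 0" using d by (rule dchar_pos)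
  thus ?thesis using dchar_root[OF d True] by (intro pint_root_unity[of _ "totient m"]) auto
next
  case False
  assume d: "dirichlet_char m \<chi>"
  thus ?thesis using False by (simp add: dchar_zero_iff[symmetric])
qed

lemma pint_ssum: "dirichlet_char m \<psi> \<Longrightarrow> pint (ssum \<psi> M n)"
  unfolding ssum_def using pint_dchar by (intro pint_sum pint_mult pint_power) auto

lemma euler_rec1:
  assumes dc: "dirichlet_char F \<psi>" and oF: "odd F" and oL: "odd L"
  shows "2 * gen_euler F \<psi> n + (\<Sum>i<n. of_nat (n choose i) * of_nat (F * L) ^ (n - i) * gen_euler F \<psi> i)
         = 2 * ssum \<psi> (F * L) n"
  using euler_rec[OF dc oF oL, of n] by (simp add: sum_atMost_split)

lemma euler_pint:
  assumes dc: "dirichlet_char F \<psi>" and oF: "odd F"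
  shows "pint (gen_euler F \<psi> n)"
proof (induction n rule: less_induct)
  case (less n)
  have "2 * gen_euler F \<psi> n = 2 * ssum \<psi> F n -
          (\<Sum>i<n. of_nat (n choose i) * of_nat F ^ (n - i) * gen_euler F \<psi> i)"
    using euler_rec1[OF dc oF, of 1 n] by (simp add: algebra_simps)
  hence eq: "gen_euler F \<psi> n = ssum \<psi> F n -
          (1/2) * (\<Sum>i<n. of_nat (n choose i) * of_nat F ^ (n - i) * gen_euler F \<psi> i)"
    by (simp add: field_simps)
  have "pint (ssum \<psi> F n)" using dc by (rule pint_ssum)
  moreover have "pint (\<Sum>i<n. of_nat (n choose i) * of_nat F ^ (n - i) * gen_euler F \<psi> i)"
    using less by (intro pint_sum pint_mult pint_power) auto
  ultimately have "pint (ssum \<psi> F n -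
          (1/2) * (\<Sum>i<n. of_nat (n choose i) * of_nat F ^ (n - i) * gen_euler F \<psi> i))"
    by (intro pint_diff pint_mult pint_half)
  thus ?case using eq by simp
qed

lemma euler_cong:
  assumes dc: "dirichlet_char F \<psi>" and oF: "odd F" and oL: "odd L"
  shows "\<exists>y. pint y \<and> gen_euler F \<psi> n - ssum \<psi> (F * L) n = of_nat (F * L) * y"
proof -
  define M where "M = F * L"
  define y where "y = - (1/2) * (\<Sum>i<n. of_nat (n choose i) * of_nat M ^ (n - i - 1) * gen_euler F \<psi> i)"
  have "2 * gen_euler F \<psi> n + (\<Sum>i<n. of_nat (n choose i) * of_nat M ^ (n - i) * gen_euler F \<psi> i)
         = 2 * ssum \<psi> M n" using euler_rec1[OF dc oF oL, of n] by (simp add: M_def)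
  moreover have "(\<Sum>i<n. of_nat (n choose i) * of_nat M ^ (n - i) * gen_euler F \<psi> i) =
      of_nat M * (\<Sum>i<n. of_nat (n choose i) * of_nat M ^ (n - i - 1) * gen_euler F \<psi> i)"
    unfolding sum_distrib_left
  proof (intro sum.cong refl)
    fix i assume "i \<in> {..<n}"
    hence "n - i = Suc (n - i - 1)" by simp
    thus "of_nat (n choose i) * of_nat M ^ (n - i) * gen_euler F \<psi> i =
          of_nat M * (of_nat (n choose i) * of_nat M ^ (n - i - 1) * gen_euler F \<psi> i)"
      by (metis (no_types, lifting) mult.left_commute mult.assoc power_Suc)
  qed
  ultimately have "gen_euler F \<psi> n - ssum \<psi> M n = of_nat M * y"
    unfolding y_def by (simp add: field_simps)
  moreover have "pint y" unfolding y_def using euler_pint[OF dc oF]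
    by (intro pint_mult pint_uminus pint_sum pint_power) auto
  ultimately show ?thesis by (auto simp: M_def)
qed

end


locale mainloc = padic +
  fixes f :: nat and \<chi> :: "nat \<Rightarrow> complex"
  assumes prim: "primitive_char f \<chi>" and odd_f: "odd f"
begin

lemma dc_chi: "dirichlet_char f \<chi>" using prim by (simp add: primitive_char_def)

lemma f_pos: "f > 0" using dc_chi by (rule dchar_pos)

definition Cl :: "complex \<Rightarrow> bool" where
  "Cl x \<longleftrightarrow> algebraic x \<and> (\<forall>e>0. \<exists>z\<in>zring (range \<chi>). N (x - z) < e)"

lemma zring_pint: "z \<in> zring (range \<chi>) \<Longrightarrow> pint z"
  by (induction rule: zring.induct) (auto intro: pint_dchar[OF dc_chi])

lemma Cl_zring: "z \<in> zring (range \<chi>) \<Longrightarrow> Cl z"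
  unfolding Cl_def using zring_pint[of z] by (auto simp: pint_def intro!: bexI[of _ z])

lemma Cl_int [simp, intro]: "Cl (of_int m)" by (rule Cl_zring) (rule zr_int)
lemma Cl_nat [simp, intro]: "Cl (of_nat m)" using Cl_int[of "int m"] by simp
lemma Cl_0 [simp, intro]: "Cl 0" using Cl_nat[of 0] by simp
lemma Cl_1 [simp, intro]: "Cl 1" using Cl_nat[of 1] by simp
lemma Cl_chi [intro]: "Cl (\<chi> a)" by (rule Cl_zring) (rule zr_gen, simp)

lemma Cl_alg: "Cl x \<Longrightarrow> algebraic x" by (simp add: Cl_def)

lemma Cl_pint: "Cl x \<Longrightarrow> pint x"
proof -
  assume c: "Cl x"
  then obtain z where z: "z \<in> zring (range \<chi>)" "N (x - z) < 1" unfolding Cl_def by force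
  have pz: "pint z" using z(1) by (rule zring_pint)
  have ax: "algebraic x" using c by (simp add: Cl_def)
  have "N ((x - z) + z) \<le> max (N (x - z)) (N z)" using pz ax by (intro N_ultra) (auto simp: pint_def)
  thus ?thesis using z pz ax by (auto simp: pint_def)
qed

lemma Cl_add [intro]: "Cl x \<Longrightarrow> Cl y \<Longrightarrow> Cl (x + y)"
  unfolding Cl_def
proof (intro conjI allI impI)
  assume x: "algebraic x \<and> (\<forall>e>0. \<exists>z\<in>zring (range \<chi>). N (x - z) < e)"
     and y: "algebraic y \<and> (\<forall>e>0. \<exists>z\<in>zring (range \<chi>). N (y - z) < e)"
  thus "algebraic (x + y)" by auto
  fix e :: real assume e: "e > 0"
  obtain z1 where z1: "z1 \<in> zring (range \<chi>)" "N (x - z1) < e" using x e by blast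
  obtain z2 where z2: "z2 \<in> zring (range \<chi>)" "N (y - z2) < e" using y e by blast
  have "N ((x - z1) + (y - z2)) < e"
    using x y z1 z2 zring_pint[OF z1(1)] zring_pint[OF z2(1)]
    by (intro N_add_lt) (auto simp: pint_def)
  moreover have "z1 + z2 \<in> zring (range \<chi>)" using z1 z2 by (intro zr_add)
  ultimately show "\<exists>z\<in>zring (range \<chi>). N (x + y - z) < e"
    by (intro bexI[of _ "z1 + z2"]) (auto simp: algebra_simps)
qed

lemma Cl_mult [intro]: "Cl x \<Longrightarrow> Cl y \<Longrightarrow> Cl (x * y)"
proof -
  assume cx: "Cl x" and cy: "Cl y"
  have px: "pint x" using cx by (rule Cl_pint)
  show ?thesis unfolding Cl_def
  proof (intro conjI allI impI)
    show "algebraic (x * y)" using cx cy by (auto simp: Cl_def)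
    fix e :: real assume e: "e > 0"
    obtain z where z: "z \<in> zring (range \<chi>)" "N (x - z) < e" using cx e unfolding Cl_def by blast
    obtain w where w: "w \<in> zring (range \<chi>)" "N (y - w) < e" using cy e unfolding Cl_def by blast
    have pz: "pint z" "pint w" using z w zring_pint by auto
    have ay: "algebraic y" using cy by (simp add: Cl_def)
    have "x * y - z * w = x * (y - w) + w * (x - z)" by (simp add: algebra_simps)
    moreover have "N (x * (y - w) + w * (x - z)) < e"
    proof (rule N_add_lt)
      show "algebraic (x * (y - w))" "algebraic (w * (x - z))" using px pz ay by (auto simp: pint_def)
      show "N (x * (y - w)) < e" using px pz ay w by (intro le_less_trans[OF N_mult_le]) (auto simp: pint_def)
      show "N (w * (x - z)) < e" using px pz z by (intro le_less_trans[OF N_mult_le]) (auto simp: pint_def)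
    qed
    moreover have "z * w \<in> zring (range \<chi>)" using z w by (intro zr_mult)
    ultimately show "\<exists>z\<in>zring (range \<chi>). N (x * y - z) < e" by metis
  qed
qed

lemma Cl_uminus [intro]: "Cl x \<Longrightarrow> Cl (- x)"
  using Cl_mult[OF Cl_int[of "-1"], of x] by simp

lemma Cl_diff [intro]: "Cl x \<Longrightarrow> Cl y \<Longrightarrow> Cl (x - y)"
  using Cl_add[of x "- y"] by auto

lemma Cl_power [intro]: "Cl x \<Longrightarrow> Cl (x ^ k)"
  by (induction k) auto

lemma Cl_sum [intro]: "(\<And>i. i \<in> A \<Longrightarrow> Cl (g i)) \<Longrightarrow> Cl (sum g A)"
  by (induction A rule: infinite_finite_induct) auto

lemma Cl_approx:
  assumes "algebraic y" "\<And>e. e > 0 \<Longrightarrow> \<exists>u. Cl u \<and> N (y - u) < e"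
  shows "Cl y"
  unfolding Cl_def
proof (intro conjI allI impI)
  show "algebraic y" by fact
  fix e :: real assume e: "e > 0"
  obtain u where u: "Cl u" "N (y - u) < e" using assms(2)[OF e] by blast
  obtain z where z: "z \<in> zring (range \<chi>)" "N (u - z) < e" using u(1) e unfolding Cl_def by blast
  have "N ((y - u) + (u - z)) < e"
    using u z assms(1) zring_pint[OF z(1)] Cl_alg[OF u(1)] by (intro N_add_lt) (auto simp: pint_def)
  thus "\<exists>z\<in>zring (range \<chi>). N (y - z) < e" using z by auto
qed

lemma Cl_teich: "\<not> p dvd a \<Longrightarrow> Cl (tc a)"
proof (rule Cl_approx)
  assume "\<not> p dvd a"
  thus "algebraic (tc a)" using pint_teich by (simp add: pint_def)
  fix e :: real assume "e > 0"
  then obtain r where "N (tc a - of_nat a ^ (p ^ r)) < e" using teich_approx \<open>\<not> p dvd a\<close> by blast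
  moreover have "Cl (of_nat a ^ (p ^ r))" by auto
  ultimately show "\<exists>u. Cl u \<and> N (tc a - u) < e" by blast
qed

lemma inverse_teich: "\<not> p dvd a \<Longrightarrow> inverse (tc a) = tc a ^ (p - 2)"
proof -
  assume na: "\<not> p dvd a"
  have "tc a * tc a ^ (p - 2) = tc a ^ (p - 1)"
    using p_gt2 by (metis Suc_diff_Suc Suc_1 power_Suc diff_Suc_1 numeral_2_eq_2 less_imp_le_nat
        diff_Suc_eq_diff_pred Suc_lessD)
  also have "\<dots> = 1" using teich_props(1)[OF na] .
  finally show ?thesis by (rule inverse_unique)
qed

lemma Cl_inv_teich: "\<not> p dvd a \<Longrightarrow> Cl (inverse (tc a))"
  using inverse_teich Cl_teich by auto

lemma in_Zp: "Cl y \<Longrightarrow> in_Zp_chi N \<chi> y"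
  by (auto simp: Cl_def in_Zp_chi_def)

lemma coprime_p_iff: "coprime a p \<longleftrightarrow> \<not> p dvd a"
proof
  assume "coprime a p"
  thus "\<not> p dvd a" using prime_p
    by (metis coprime_absorb_right coprime_commute not_prime_unit)
next
  assume "\<not> p dvd a"
  thus "coprime a p" using prime_imp_coprime[OF prime_p] by (simp add: coprime_commute)
qed

lemma coprime_lcm_iff: "coprime a (lcm f p) \<longleftrightarrow> coprime a f \<and> \<not> p dvd a"
proof -
  have "coprime a (lcm f p) \<longleftrightarrow> coprime a f \<and> coprime a p"
  proof
    assume "coprime a (lcm f p)"
    thus "coprime a f \<and> coprime a p"
      using coprime_divisors[OF dvd_refl dvd_lcm1] coprime_divisors[OF dvd_refl dvd_lcm2] by blast
  next
    assume "coprime a f \<and> coprime a p"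
    hence "coprime a (f * p)" by simp
    moreover have "lcm f p dvd f * p" by (intro lcm_least) auto
    ultimately show "coprime a (lcm f p)" using coprime_divisors[OF dvd_refl] by blast
  qed
  thus ?thesis by (simp add: coprime_p_iff)
qed

lemma dchar_g:
  assumes n: "n > 0"
  shows "dirichlet_char (lcm f p) (\<lambda>a. \<chi> a * inverse (tc a) ^ n)"
  unfolding dirichlet_char_def
proof (intro conjI allI)
  show "lcm f p > 0" using f_pos by (simp add: lcm_pos_nat)
next
  fix a b
  show "\<chi> (a * b) * inverse (tc (a * b)) ^ n = \<chi> a * inverse (tc a) ^ n * (\<chi> b * inverse (tc b) ^ n)"
    using dc_chi by (simp add: dchar_mult teich_mult power_mult_distrib mult_ac)
next
  fix a
  have "\<chi> (a + lcm f p) = \<chi> a"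
    using dchar_periodic_mult[OF dc_chi, of a "lcm f p div f"] f_pos by simp
  moreover have "tc (a + lcm f p) = tc a"
  proof (rule teich_cong)
    obtain t where "lcm f p = p * t" using dvd_lcm2[of p f] by (elim dvdE)
    thus "[a + lcm f p = a] (mod p)" by (simp add: cong_def)
  qed
  ultimately show "\<chi> (a + lcm f p) * inverse (tc (a + lcm f p)) ^ n = \<chi> a * inverse (tc a) ^ n" by simp
next
  fix a
  have "tc a = 0 \<longleftrightarrow> p dvd a" using teich_dvd teich_ne0 by blast
  thus "(\<chi> a * inverse (tc a) ^ n = 0) = (\<not> coprime a (lcm f p))"
    using n dc_chi by (auto simp: coprime_lcm_iff dchar_zero_iff)
next
  have "tc (Suc 0) = 1" using teich_1 by simp
  thus "\<chi> 1 * inverse (tc 1) ^ n = 1" using dc_chi by (simp add: dchar_1')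
qed

lemma g_shift:
  assumes n: "n > 0" and c: "(p - 1) dvd c"
  shows "(\<lambda>a. \<chi> a * inverse (tc a) ^ (n + j * c)) = (\<lambda>a. \<chi> a * inverse (tc a) ^ n)"
proof
  fix a
  show "\<chi> a * inverse (tc a) ^ (n + j * c) = \<chi> a * inverse (tc a) ^ n"
  proof (cases "p dvd a")
    case True
    thus ?thesis using n by (simp add: teich_dvd power_0_left)
  next
    case False
    obtain t where t: "c = (p - 1) * t" using c by (elim dvdE)
    have "tc a ^ c = 1" using teich_props(1)[OF False] by (simp add: t power_mult)
    hence "inverse (tc a) ^ c = 1" by (metis power_inverse inverse_1)
    hence "inverse (tc a) ^ (j * c) = 1" by (simp add: power_mult mult.commute)
    thus ?thesis by (simp add: power_add)
  qed
qed

end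


context padic
begin

definition Sset :: "nat \<Rightarrow> nat \<Rightarrow> nat set" where
  "Sset F m = {a \<in> {1..F * p ^ m}. \<not> p dvd a}"

definition Tsum :: "(nat \<Rightarrow> complex) \<Rightarrow> nat \<Rightarrow> nat \<Rightarrow> nat \<Rightarrow> complex" where
  "Tsum \<psi> F m n' = (\<Sum>a\<in>Sset F m. (-1) ^ a * \<psi> a * of_nat a ^ n')"

lemma finite_Sset [simp]: "finite (Sset F m)" by (simp add: Sset_def)

lemma ssum_split:
  assumes dc: "dirichlet_char F \<psi>" and m: "m \<ge> 1"
  shows "ssum \<psi> (F * p ^ m) n' = Tsum \<psi> F m n' + \<psi> p * of_nat p ^ n' * ssum \<psi> (F * p ^ (m - 1)) n'"
proof -
  define A where "A = {1..F * p ^ m}"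
  define K where "K = F * p ^ (m - 1)"
  define h where "h a = (-1) ^ a * \<psi> a * (of_nat a :: complex) ^ n'" for a
  have FK: "F * p ^ m = p * K" using m by (simp add: K_def power_eq_if mult_ac)
  have "ssum \<psi> (F * p ^ m) n' = sum h (A \<inter> {a. p dvd a}) + sum h (A - {a. p dvd a})"
    unfolding ssum_def h_def A_def by (rule sum.Int_Diff) simp
  moreover have "A - {a. p dvd a} = Sset F m" by (auto simp: A_def Sset_def)
  moreover have "A \<inter> {a. p dvd a} = (\<lambda>b. p * b) ` {1..K}"
  proof
    show "A \<inter> {a. p dvd a} \<subseteq> (\<lambda>b. p * b) ` {1..K}"
    proof
      fix a assume a: "a \<in> A \<inter> {a. p dvd a}"
      then obtain b where b: "a = p * b" by auto
      have "b \<ge> 1" using a b by (auto simp: A_def)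
      moreover have "p * b \<le> p * K" using a b FK by (auto simp: A_def)
      hence "b \<le> K" by simp
      ultimately show "a \<in> (\<lambda>b. p * b) ` {1..K}" using b by auto
    qed
    show "(\<lambda>b. p * b) ` {1..K} \<subseteq> A \<inter> {a. p dvd a}"
      using FK p_pos by (auto simp: A_def Suc_le_eq)
  qed
  moreover have "sum h ((\<lambda>b. p * b) ` {1..K}) = (\<Sum>b=1..K. h (p * b))"
  proof -
    have "inj_on (\<lambda>b. p * b) {1..K}" unfolding inj_on_def using p_gt2 by simp
    thus ?thesis by (simp add: sum.reindex)
  qed
  moreover have "h (p * b) = \<psi> p * of_nat p ^ n' * h b" for b
  proof -
    have "(-1 :: complex) ^ (p * b) = (-1) ^ b" using odd_p by (simp add: power_mult)
    thus ?thesis using dc by (simp add: h_def dchar_mult power_mult_distrib mult_ac)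
  qed
  ultimately show ?thesis
    by (simp add: Tsum_def ssum_def sum_distrib_left K_def h_def add.commute)
qed

lemma N_FP: "N (of_nat (F * p ^ j)) \<le> inverse (real p ^ j)"
proof -
  have "int p ^ j dvd int (F * p ^ j)" by (simp add: of_nat_power)
  from N_int_dvd[OF this] show ?thesis by simp
qed

lemma eps_T:
  assumes dc: "dirichlet_char F \<psi>" and oF: "odd F" and m: "m \<ge> 1"
  shows "N ((1 - \<psi> p * of_nat p ^ n') * gen_euler F \<psi> n' - Tsum \<psi> F m n') \<le> inverse (real p ^ (m - 1))"
proof -
  define B where "B = inverse (real p ^ (m - 1))"
  have B0: "B \<ge> 0" by (simp add: B_def)
  obtain y1 where y1: "pint y1" "gen_euler F \<psi> n' - ssum \<psi> (F * p ^ m) n' = of_nat (F * p ^ m) * y1"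
    using euler_cong[OF dc oF, of "p ^ m" n'] odd_p by auto
  obtain y2 where y2: "pint y2" "gen_euler F \<psi> n' - ssum \<psi> (F * p ^ (m - 1)) n' = of_nat (F * p ^ (m - 1)) * y2"
    using euler_cong[OF dc oF, of "p ^ (m - 1)" n'] odd_p by auto
  define E where "E = gen_euler F \<psi> n'"
  define P where "P = \<psi> p * of_nat p ^ n'"
  have pP: "pint P" using pint_dchar[OF dc] by (auto simp: P_def)
  have "(1 - P) * E - Tsum \<psi> F m n' = (E - ssum \<psi> (F * p ^ m) n') - P * (E - ssum \<psi> (F * p ^ (m - 1)) n')"
    using ssum_split[OF dc m, of n'] by (simp add: P_def algebra_simps)
  also have "\<dots> = y1 * of_nat (F * p ^ m) - (P * y2) * of_nat (F * p ^ (m - 1))"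
    using y1 y2 by (simp add: E_def mult_ac)
  finally have eq: "(1 - P) * E - Tsum \<psi> F m n' = y1 * of_nat (F * p ^ m) - (P * y2) * of_nat (F * p ^ (m - 1))" .
  have b1: "N (y1 * of_nat (F * p ^ m)) \<le> B"
  proof (rule N_mult_le[OF y1(1)])
    have "N (of_nat (F * p ^ m)) \<le> inverse (real p ^ m)" by (rule N_FP)
    also have "\<dots> \<le> B" unfolding B_def
      using prime_gt_1_nat[OF prime_p] by (intro le_imp_inverse_le power_increasing) auto
    finally show "N (of_nat (F * p ^ m)) \<le> B" .
  qed (rule alg_of_nat)
  have b2: "N ((P * y2) * of_nat (F * p ^ (m - 1))) \<le> B"
    using pP y2(1) N_FP[of F "m - 1"] by (intro N_mult_le) (auto simp: B_def)
  have "N (y1 * of_nat (F * p ^ m) - (P * y2) * of_nat (F * p ^ (m - 1))) \<le> B"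
    using b1 b2 y1 y2 pP by (intro order.trans[OF N_diff]) (auto simp: pint_def)
  thus ?thesis using eq by (simp add: E_def P_def B_def)
qed

definition Usum :: "(nat \<Rightarrow> complex) \<Rightarrow> nat \<Rightarrow> nat \<Rightarrow> nat \<Rightarrow> nat \<Rightarrow> nat \<Rightarrow> complex" where
  "Usum \<psi> F m n c k = (\<Sum>a\<in>Sset F m. (-1) ^ a * \<psi> a * of_nat a ^ n *
      of_int ((int a ^ c - 1) div int p) ^ k)"

lemma delta_T:
  assumes c: "(p - 1) dvd c"
  shows "delta_op c k (Tsum \<psi> F m) n = of_nat p ^ k * Usum \<psi> F m n c k"
proof -
  have inner: "(\<Sum>j\<le>k. of_nat (k choose j) * (-1) ^ (k - j) * ((-1) ^ a * \<psi> a * of_nat a ^ (n + j * c)))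
      = of_nat p ^ k * ((-1) ^ a * \<psi> a * of_nat a ^ n * of_int ((int a ^ c - 1) div int p) ^ k)"
    if a: "a \<in> Sset F m" for a
  proof -
    have na: "\<not> p dvd a" using a by (simp add: Sset_def)
    obtain t where t: "c = (p - 1) * t" using c by (elim dvdE)
    have "[a ^ (p - 1) = 1] (mod p)" using fermat_theorem[OF prime_p na] .
    hence "[(a ^ (p - 1)) ^ t = 1 ^ t] (mod p)" by (rule cong_pow)
    hence "[a ^ c = 1] (mod p)" by (simp add: t power_mult)
    hence "[int a ^ c = int 1] (mod int p)" using cong_int_iff[of "a ^ c" 1 p] by simp
    hence "int p dvd int a ^ c - 1" by (simp add: cong_iff_dvd_diff)
    hence qa: "int a ^ c - 1 = int p * ((int a ^ c - 1) div int p)" by simp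
    have qc: "(of_nat a :: complex) ^ c - 1 = of_nat p * of_int ((int a ^ c - 1) div int p)"
    proof -
      have "(of_nat a :: complex) ^ c - 1 = of_int (int a ^ c - 1)" by simp
      also have "\<dots> = of_int (int p * ((int a ^ c - 1) div int p))" using qa by simp
      finally show ?thesis by simp
    qed
    have "(\<Sum>j\<le>k. of_nat (k choose j) * (-1) ^ (k - j) * ((-1) ^ a * \<psi> a * of_nat a ^ (n + j * c)))
        = (-1) ^ a * \<psi> a * of_nat a ^ n * (\<Sum>j\<le>k. of_nat (k choose j) * ((of_nat a :: complex) ^ c) ^ j * (-1) ^ (k - j))"
    proof -
      have pw: "(of_nat a :: complex) ^ (n + j * c) = of_nat a ^ n * (of_nat a ^ c) ^ j" for j
      proof -
        have "(of_nat a :: complex) ^ (j * c) = of_nat a ^ (c * j)" by (simp only: mult.commute)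
        also have "\<dots> = (of_nat a ^ c) ^ j" by (rule power_mult)
        finally show ?thesis by (simp add: power_add)
      qed
      show ?thesis unfolding pw by (simp add: sum_distrib_left mult_ac)
    qed
    also have "(\<Sum>j\<le>k. of_nat (k choose j) * ((of_nat a :: complex) ^ c) ^ j * (-1) ^ (k - j)) = (of_nat a ^ c + (-1)) ^ k"
      by (rule binomial_ring[symmetric])
    also have "(of_nat a ^ c + (-1) :: complex) = of_nat p * of_int ((int a ^ c - 1) div int p)"
      using qc by simp
    finally show ?thesis by (simp add: power_mult_distrib mult_ac)
  qed
  have "delta_op c k (Tsum \<psi> F m) n =
        (\<Sum>a\<in>Sset F m. \<Sum>j\<le>k. of_nat (k choose j) * (-1) ^ (k - j) * ((-1) ^ a * \<psi> a * of_nat a ^ (n + j * c)))"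
    unfolding delta_op_def Tsum_def by (simp add: sum_distrib_left sum.swap[of _ "Sset F m"])
  also have "\<dots> = (\<Sum>a\<in>Sset F m. of_nat p ^ k * ((-1) ^ a * \<psi> a * of_nat a ^ n * of_int ((int a ^ c - 1) div int p) ^ k))"
    using inner by (intro sum.cong refl) auto
  finally show ?thesis by (simp add: Usum_def sum_distrib_left)
qed

lemma pint_Tsum: "dirichlet_char F \<psi> \<Longrightarrow> pint (Tsum \<psi> F m n')"
  unfolding Tsum_def using pint_dchar by (intro pint_sum pint_mult pint_power) auto

end

context mainloc
begin

lemma Cl_Usum: "(\<And>x. Cl (\<psi> x)) \<Longrightarrow> Cl (Usum \<psi> F m n c k)"
  unfolding Usum_def by (intro Cl_sum Cl_mult Cl_power Cl_uminus Cl_1 Cl_nat Cl_int) auto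

end


theorem theorem3p1:
  fixes p f n c k :: nat and \<chi> :: "nat \<Rightarrow> complex" and N :: "complex \<Rightarrow> real"
  assumes "prime p" and "odd p"
    and "padic_abs_ext p N"
    and "primitive_char f \<chi>" and "odd f"
    and "n > 0" and "c > 0" and "k > 0" and "(p - 1) dvd c"
  shows "in_Zp_chi N \<chi> (delta_op c k (eps p N f \<chi>) n / of_nat p ^ k)"
proof -
  interpret mainloc p N f \<chi>
    using assms by (unfold_locales) auto
  note n = \<open>n > 0\<close> and cdiv = \<open>(p - 1) dvd c\<close>
  define g where "g = (\<lambda>a. \<chi> a * inverse (tc a) ^ n)"
  have dcg: "dirichlet_char (lcm f p) g" using dchar_g[OF n] by (simp add: g_def)
  obtain F \<psi> where ap: "assoc_prim (lcm f p) g = (F, \<psi>)" by (cases "assoc_prim (lcm f p) g")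
  have spec: "prim_spec (lcm f p) g F \<psi>" using assoc_prim_spec[OF dcg] ap by simp
  have dc: "dirichlet_char F \<psi>" using spec by (simp add: prim_spec_def primitive_char_def)
  have oF: "odd F"
  proof
    assume "even F"
    moreover have "F dvd f * p"
      using spec dvd_trans[of F "lcm f p" "f * p"] by (auto simp: prim_spec_def intro: lcm_least)
    ultimately have "even (f * p)" by (rule dvd_trans)
    thus False using odd_f odd_p by simp
  qed
  have Clpsi: "Cl (\<psi> x)" for x
  proof (cases "coprime x F")
    case True
    obtain b where b: "coprime b (lcm f p)" "\<psi> x = g b"
      using prim_spec_vals[OF dcg spec True] by blast
    have "\<not> p dvd b" using b(1) by (simp add: coprime_lcm_iff)
    hence "Cl (g b)" unfolding g_def by (intro Cl_mult Cl_chi Cl_power Cl_inv_teich)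
    thus ?thesis using b by simp
  next
    case False
    thus ?thesis using dc by (simp add: dchar_zero_iff[symmetric])
  qed
  define ep where "ep n' = (1 - \<psi> p * of_nat p ^ n') * gen_euler F \<psi> n'" for n'
  have eps_eq: "eps p N f \<chi> (n + j * c) = ep (n + j * c)" for j
  proof -
    have "(\<lambda>a. \<chi> a * inverse (teich p N a) ^ (n + j * c)) = g"
      using g_shift[OF n cdiv, of j] by (simp add: g_def)
    thus ?thesis by (simp add: eps_def ap ep_def)
  qed
  have dl: "delta_op c k (eps p N f \<chi>) n = delta_op c k ep n"
    unfolding delta_op_def using eps_eq by simp
  have pep: "pint (ep n')" for n'
    unfolding ep_def
    by (intro pint_mult pint_diff pint_1 pint_power pint_nat pint_dchar[OF dc] euler_pint[OF dc oF])
  define y where "y = delta_op c k ep n / of_nat p ^ k"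
  have pdl: "pint (delta_op c k ep n)" unfolding delta_op_def
    by (intro pint_sum pint_mult pint_power pint_uminus pint_1 pint_nat pep)
  have Npk: "N (inverse (of_nat p ^ k)) = real p ^ k"
    using N_inverse[OF alg_power[OF alg_of_nat], of p k] N_p_power[of k] by simp
  have main: "N (y - Usum \<psi> F (Suc j) n c k) \<le> real p ^ k * inverse (real p ^ j)" for j
  proof -
    define m where "m = Suc j"
    define D where "D = (\<Sum>i\<le>k. of_nat (k choose i) * (-1) ^ (k - i) *
                          (ep (n + i * c) - Tsum \<psi> F m (n + i * c)))"
    have "delta_op c k ep n - delta_op c k (Tsum \<psi> F m) n = D"
      unfolding delta_op_def D_def by (simp add: sum_subtractf algebra_simps)
    hence e1: "delta_op c k ep n - of_nat p ^ k * Usum \<psi> F m n c k = D"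
      using delta_T[OF cdiv] by simp
    have e2: "(delta_op c k ep n - of_nat p ^ k * Usum \<psi> F m n c k) / of_nat p ^ k = y - Usum \<psi> F m n c k"
      unfolding y_def using p_pos by (simp only: diff_divide_distrib nonzero_mult_div_cancel_left of_nat_eq_0_iff
          power_not_zero neq0_conv not_False_eq_True)
    have "y - Usum \<psi> F m n c k = (delta_op c k ep n - of_nat p ^ k * Usum \<psi> F m n c k) / of_nat p ^ k"
      using e2 by (rule sym)
    also have "\<dots> = D / of_nat p ^ k" by (simp only: e1)
    also have "\<dots> = D * inverse (of_nat p ^ k)" by (rule divide_inverse)
    finally have "y - Usum \<psi> F m n c k = D * inverse (of_nat p ^ k)" .
    moreover have ND: "N D \<le> inverse (real p ^ j)"
      unfolding D_def
    proof (rule N_sum_le)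
      fix i assume "i \<in> {..k}"
      have pt: "pint (ep (n + i * c) - Tsum \<psi> F m (n + i * c))"
        by (intro pint_diff pep pint_Tsum[OF dc])
      have "N (ep (n + i * c) - Tsum \<psi> F m (n + i * c)) \<le> inverse (real p ^ j)"
        using eps_T[OF dc oF, of m "n + i * c"] by (simp add: m_def ep_def)
      hence "N (of_nat (k choose i) * (-1) ^ (k - i) * (ep (n + i * c) - Tsum \<psi> F m (n + i * c)))
             \<le> inverse (real p ^ j)"
        using pt by (intro N_mult_le pint_mult pint_power pint_uminus pint_1 pint_nat) (auto simp: pint_def)
      moreover have "pint (of_nat (k choose i) * (-1) ^ (k - i) * (ep (n + i * c) - Tsum \<psi> F m (n + i * c)))"
        by (intro pint_mult pint_power pint_uminus pint_1 pint_nat pt)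
      ultimately show "algebraic (of_nat (k choose i) * (-1) ^ (k - i) * (ep (n + i * c) - Tsum \<psi> F m (n + i * c))) \<and>
            N (of_nat (k choose i) * (-1) ^ (k - i) * (ep (n + i * c) - Tsum \<psi> F m (n + i * c)))
             \<le> inverse (real p ^ j)" by (auto simp: pint_def)
    qed simp
    have aD: "algebraic D" unfolding D_def
      by (intro pint_alg pint_sum pint_mult pint_power pint_uminus pint_1 pint_nat pint_diff pep pint_Tsum[OF dc])
    have "N (D * inverse (of_nat p ^ k)) = N D * real p ^ k"
      using aD Npk by (simp add: N_mult alg_inverse[OF alg_power[OF alg_of_nat]])
    ultimately show ?thesis using ND by (simp add: m_def mult.commute)
  qed
  have "Cl y"
  proof (rule Cl_approx)
    show "algebraic y" unfolding y_def using pdl by (auto simp: pint_def)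
    fix e :: real assume e: "e > 0"
    obtain j where j: "real p ^ k / e < real p ^ j"
      using real_arch_pow[of "real p" "real p ^ k / e"] prime_gt_1_nat[OF prime_p] by auto
    have "real p ^ k * inverse (real p ^ j) < e"
      using j e by (simp add: field_simps)
    hence "N (y - Usum \<psi> F (Suc j) n c k) < e" using main[of j] by simp
    moreover have "Cl (Usum \<psi> F (Suc j) n c k)" using Clpsi by (rule Cl_Usum)
    ultimately show "\<exists>u. Cl u \<and> N (y - u) < e" by blast
  qed
  thus ?thesis using in_Zp dl by (simp add: y_def)
qed


end
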